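(* Let $m\ge 2$, $d\ge1$ be integers, $n=md$, $a,c>0$, $q=\frac{ad}{2c}+1$. Let $G$ be the $n\times n$ matrix with $G_{ij}=\frac{n^2-1-6|i-j|(n-|i-j|)}{12cn}$, let $\Pi$ be the $n\times\binom m2$ matrix with columns $\sqrt{a/m}\,(e_{1+(i-1)d}-e_{1+(j-1)d})$, $1\le i<j\le m$, and let $M=G-G\Pi(I+\Pi^\top G\Pi)^{-1}\Pi^\top G$. Then $M$ is the block Toeplitz (block circulant) matrix whose $d\times d$ block in block position $(r,s)$ is $M_{((s-r)\bmod m)+1}$, where for $k=1,\dots,m$, $i=1,\dots,d$, $h=0,\dots,d-1$, writing $\ell=|i-1-(k-1)d-h|$, $$\begin{aligned}(M_k)_{i,h+1}=\frac{1}{2cn}\Biggl(&-\ell(n-\ell)+\frac{1}{T_m(q)-1}\Bigl[n(h-i+1)\bigl(V_{k-1}(q)-V_{m-k}(q)\bigr)-\Bigl(\tfrac{an}{c}(i-1)(h-d)-nd\Bigr)\bigl(U_{k-2}(q)+U_{m-k}(q)\bigr)\\&-\tfrac{2cd}{a}\bigl(V_{m-1}(q)-1\bigr)-d^2U_{m-1}(q)\Bigr]+dh+nh-nd+(2kd-3d+2h-n)(i-1)+kd(n-2h)-d^2(k-1)^2\Biggr)+\frac{d^2-1}{12cn}.\end{aligned}$$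
   Context: $e_j$ is the $j$-th standard basis vector of $\mathbb R^n$; $I$ is the identity of size $\binom m2$. ($G$ is the group inverse of the Laplacian of the $n$-cycle with conductances $c$.) $T_k,U_k$ are the Chebyshev polynomials of the first and second kind ($T_0=1,T_1=x,U_0=1,U_1=2x$, recurrence $p_{k+1}=2xp_k-p_{k-1}$), $U_{-1}=0$; $V_k$ are those of the third kind ($V_0=1$, $V_1=2x-1$, $V_{k+1}=2xV_k-V_{k-1}$). *)

theory Defs
  imports Complex_Main "Jordan_Normal_Form.Matrix" "Jordan_Normal_Form.Gauss_Jordan_Elimination"
begin

fun chebT :: "nat \<Rightarrow> real \<Rightarrow> real" where
  "chebT 0 x = 1"
| "chebT (Suc 0) x = x"
| "chebT (Suc (Suc k)) x = 2 * x * chebT (Suc k) x - chebT k x"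

fun chebU :: "nat \<Rightarrow> real \<Rightarrow> real" where
  "chebU 0 x = 1"
| "chebU (Suc 0) x = 2 * x"
| "chebU (Suc (Suc k)) x = 2 * x * chebU (Suc k) x - chebU k x"

fun chebV :: "nat \<Rightarrow> real \<Rightarrow> real" where
  "chebV 0 x = 1"
| "chebV (Suc 0) x = 2 * x - 1"
| "chebV (Suc (Suc k)) x = 2 * x * chebV (Suc k) x - chebV k x"

definition chebU_int :: "int \<Rightarrow> real \<Rightarrow> real" where
  "chebU_int k x = (if k < 0 then 0 else chebU (nat k) x)"

(* G: group inverse of the Laplacian of the n-cycle with conductance c (0-indexed) *)
definition Gmat :: "nat \<Rightarrow> real \<Rightarrow> real mat" where
  "Gmat n c = mat n n (\<lambda>(i,j).
     (real n ^ 2 - 1 - 6 * real (nat \<bar>int i - int j\<bar>) * (real n - real (nat \<bar>int i - int j\<bar>)))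
       / (12 * c * real n))"

definition pairs :: "nat \<Rightarrow> (nat \<times> nat) list" where
  "pairs m = [(i,j). j \<leftarrow> [0..<m], i \<leftarrow> [0..<j]]"

(* Pi: n x binom(m,2) matrix, column for pair (i,j) is sqrt(a/m) (e_{1+(i-1)d} - e_{1+(j-1)d})
   (in 0-indexed form: rows i*d and j*d) *)
definition Pimat :: "nat \<Rightarrow> nat \<Rightarrow> real \<Rightarrow> real mat" where
  "Pimat m d a = mat (m * d) (m choose 2) (\<lambda>(r,p).
     (let (i,j) = pairs m ! p in
       sqrt (a / real m) * ((if r = i * d then 1 else 0) - (if r = j * d then 1 else 0))))"

definition Mmat :: "nat \<Rightarrow> nat \<Rightarrow> real \<Rightarrow> real \<Rightarrow> real mat" where
  "Mmat m d a c = (let n = m * d; G = Gmat n c; P = Pimat m d a;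
       X = the (mat_inverse (1\<^sub>m (m choose 2) + transpose_mat P * G * P))
     in G - G * P * X * transpose_mat P * G)"

(* (M_k)_{i,h+1}, with k \<in> {1..m}, i \<in> {1..d}, h \<in> {0..d-1} as in the paper *)
definition blockEntry :: "nat \<Rightarrow> nat \<Rightarrow> real \<Rightarrow> real \<Rightarrow> nat \<Rightarrow> nat \<Rightarrow> nat \<Rightarrow> real" where
  "blockEntry m d a c k i h = (let n = real (m * d); dd = real d; q = a * dd / (2 * c) + 1;
     l = real (nat \<bar>int i - 1 - (int k - 1) * int d - int h\<bar>);
     ii = real i; hh = real h; kk = real k in
     (1 / (2 * c * n)) * (- l * (n - l)
        + (1 / (chebT m q - 1)) *
          (n * (hh - ii + 1) * (chebV (k - 1) q - chebV (m - k) q)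
           - ((a * n / c) * (ii - 1) * (hh - dd) - n * dd) * (chebU_int (int k - 2) q + chebU (m - k) q)
           - (2 * c * dd / a) * (chebV (m - 1) q - 1)
           - dd ^ 2 * chebU (m - 1) q)
        + dd * hh + n * hh - n * dd + (2 * kk * dd - 3 * dd + 2 * hh - n) * (ii - 1)
        + kk * dd * (n - 2 * hh) - dd ^ 2 * (kk - 1) ^ 2)
     + (dd ^ 2 - 1) / (12 * c * n))"

end

theory Submission
  imports Defs "Jordan_Normal_Form.Determinant"
begin


definition coreX :: "real\<Rightarrow>real\<Rightarrow>real\<Rightarrow>real\<Rightarrow>real\<Rightarrow>real\<Rightarrow>real\<Rightarrow>real\<Rightarrow>real\<Rightarrow>real\<Rightarrow>real\<Rightarrow>real\<Rightarrow>real\<Rightarrow>real\<Rightarrow>real" where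
 "coreX n d a c Tm k t h Vk Vmk Ukm Umk Vm1 Um1 =
 (1/(Tm-1))*(n*(h-t)*(Vk - Vmk) - ((a*n/c)*t*(h-d) - n*d)*(Ukm + Umk) - (2*c*d/a)*(Vm1 - 1) - d^2*Um1)
  + d*h + n*h - n*d + (2*(k+1)*d - 3*d + 2*h - n)*t + (k+1)*d*(n-2*h) - d^2*k^2"

definition CSX :: "real\<Rightarrow>real\<Rightarrow>real\<Rightarrow>real\<Rightarrow>real\<Rightarrow>real\<Rightarrow>real\<Rightarrow>real\<Rightarrow>real\<Rightarrow>real\<Rightarrow>real\<Rightarrow>real" where
 "CSX m n d a c Tm t h SU Vm1 Um1 =
   (1/(Tm-1))*(- ((a*n/c)*t*(h-d) - n*d)*(2*SU - Um1) - m*(2*c*d/a)*(Vm1-1) - m*d^2*Um1)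
   + m*(d*h + n*h - n*d) + (2*h - d - n)*t*m + 2*d*t*(m*(m-1)/2) + d*(n-2*h)*(m*(m-1)/2 + m)
   - d^2*((m-1)*m*(2*m-1)/6)"

definition Sphi :: "real \<Rightarrow> real \<Rightarrow> real \<Rightarrow> real \<Rightarrow> real" where
  "Sphi m n d h = (n-h)*(d*(m*(m-1)/2) + h*m) - d^2*((m-1)*m*(2*m-1)/6) - d*h*(m*(m-1)/2)"

lemma coreX_lin:
  "coreX n d a c Tm k t h Vk Vmk Ukm Umk Vm1 Um1 =
   coreX n d a c Tm k 0 h Vk Vmk Ukm Umk Vm1 Um1 + t * (coreX n d a c Tm k 1 h Vk Vmk Ukm Umk Vm1 Um1 - coreX n d a c Tm k 0 h Vk Vmk Ukm Umk Vm1 Um1)"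
  unfolding coreX_def by (Groebner_Basis.algebra)

lemma coreX_sum_split:
  "coreX n d a c Tm k t h Vk Vmk Ukm Umk Vm1 Um1 =
    ((1/(Tm-1))*(- (2*c*d/a)*(Vm1 - 1) - d^2*Um1) + d*h + n*h - n*d + (2*d - 3*d + 2*h - n)*t + d*(n-2*h))
    + k * (2*d*t + d*(n-2*h)) - d^2 * k^2
    + (1/(Tm-1))*(n*(h-t)) * (Vk - Vmk) - (1/(Tm-1))*((a*n/c)*t*(h-d) - n*d) * (Ukm + Umk)"
  unfolding coreX_def by (Groebner_Basis.algebra)

context
  fixes m n d a c q e D T Um1 Um2 SU :: real
  assumes d0: "d \<noteq> 0" and c0: "c \<noteq> 0" and e0: "e \<noteq> 0" and D0: "D \<noteq> 0" and m0: "m \<noteq> 0"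
   and nd: "n = m*d" and qe: "q = 1 + e" and ad: "a = 2*c*e/d" and U2: "Um2 = q*Um1 - 1 - D"
   and TD: "T = 1 + D" and SUd: "SU = (2*q*Um1 - Um2 - Um1 - 1)/(2*e)"
begin

lemma A_generic:
  "coreX n d a c T k d h ((2*q*u1-u0) - u1) (w1 - w2) u1 w1 (Um1-Um2) Um1
       = coreX n d a c T (k-1) 0 h (u1 - u0) ((2*q*w1-w2) - w1) u0 (2*q*w1-w2) (Um1-Um2) Um1"
  unfolding coreX_def nd qe ad U2 TD
  apply (simp add: field_simps d0 c0 e0 D0 m0)
  by (Groebner_Basis.algebra)

lemma A_wrap:
  "coreX n d a c T 0 d h 1 (Um1-Um2) 0 Um1 (Um1-Um2) Um1
       = coreX n d a c T (m-1) 0 h (Um1-Um2) 1 Um2 1 (Um1-Um2) Um1"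
  unfolding coreX_def nd qe ad U2 TD
  apply (simp add: field_simps d0 c0 e0 D0 m0)
  by (Groebner_Basis.algebra)

lemma C_generic:
  "c*(2*coreX n d a c T k 0 h (u1-u0) (w1-w2) u0 w1 (Um1-Um2) Um1
      - coreX n d a c T k 1 h (u1-u0) (w1-w2) u0 w1 (Um1-Um2) Um1
      - coreX n d a c T (k+1) (d-1) h ((2*q*u1-u0)-u1) (w2-(2*q*w2-w1)) u1 w2 (Um1-Um2) Um1)/(2*c*n)
   + a*((coreX n d a c T k 0 h (u1-u0) (w1-w2) u0 w1 (Um1-Um2) Um1 - (k*d+h)*(n-k*d-h))/(2*c*n)
        - (1/m)*((CSX m n d a c T 0 h SU (Um1-Um2) Um1 - Sphi m n d h)/(2*c*n))) = 0"
  unfolding coreX_def CSX_def Sphi_def SUd U2 nd qe ad TD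
  apply (simp add: field_simps d0 c0 e0 D0 m0)
  by (Groebner_Basis.algebra)

lemma C_wrap:
  "c*(2*coreX n d a c T (m-1) 0 h (Um1-Um2) 1 Um2 1 (Um1-Um2) Um1
      - coreX n d a c T (m-1) 1 h (Um1-Um2) 1 Um2 1 (Um1-Um2) Um1
      - coreX n d a c T 0 (d-1) h 1 (Um1-Um2) 0 Um1 (Um1-Um2) Um1)/(2*c*n)
   + a*((coreX n d a c T (m-1) 0 h (Um1-Um2) 1 Um2 1 (Um1-Um2) Um1 - ((m-1)*d+h)*(n-(m-1)*d-h))/(2*c*n)
        - (1/m)*((CSX m n d a c T 0 h SU (Um1-Um2) Um1 - Sphi m n d h)/(2*c*n))) = 0"
  unfolding coreX_def CSX_def Sphi_def SUd U2 nd qe ad TD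
  apply (simp add: field_simps d0 c0 e0 D0 m0)
  by (Groebner_Basis.algebra)

lemma D_sum:
  "d*CSX m n d a c T 0 h SU (Um1-Um2) Um1 + (d*(d-1)/2)*(CSX m n d a c T 1 h SU (Um1-Um2) Um1 - CSX m n d a c T 0 h SU (Um1-Um2) Um1)
   + n*(d^2-n^2)/6 = 0"
  unfolding CSX_def SUd U2 nd qe ad TD
  apply (simp add: field_simps d0 c0 e0 D0 m0)
  by (Groebner_Basis.algebra)

end


abbreviation Uz :: "real \<Rightarrow> int \<Rightarrow> real" where "Uz q j \<equiv> chebU_int j q"

lemma Uz_neg1[simp]: "Uz q (-1) = 0" by (simp add: chebU_int_def)
lemma Uz_0[simp]: "Uz q 0 = 1" by (simp add: chebU_int_def)
lemma Uz_nat: "Uz q (int k) = chebU k q" by (simp add: chebU_int_def)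

lemma Uz_rec: assumes "j \<ge> 0" shows "Uz q (j+1) = 2*q*Uz q j - Uz q (j-1)"
proof -
  obtain k where k: "j = int k" using assms nonneg_eq_int by blast
  show ?thesis
  proof (cases k)
    case 0 then show ?thesis using k by (simp add: chebU_int_def)
  next
    case (Suc l)
    have "j + 1 = int (Suc (Suc l))" "j = int (Suc l)" "j - 1 = int l" using k Suc by auto
    then show ?thesis by (simp only: Uz_nat chebU.simps)
  qed
qed

lemma chebV_Uz: "chebV k q = Uz q (int k) - Uz q (int k - 1)"
proof (induction k q rule: chebV.induct)
  case (1 x) then show ?case by simp
next
  case (2 x) then show ?case by (simp add: chebU_int_def)
next
  case (3 k x)
  have i1: "int (Suc k) - 1 = int k" "int (Suc (Suc k)) - 1 = int (Suc k)" by auto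
  have r1: "Uz x (int (Suc (Suc k))) = 2*x*Uz x (int (Suc k)) - Uz x (int k)"
    using Uz_rec[of "int (Suc k)" x] by (simp add: add.commute)
  have r2: "Uz x (int (Suc k)) = 2*x*Uz x (int k) - Uz x (int k - 1)"
    using Uz_rec[of "int k" x] by (simp add: add.commute)
  have e: "chebV (Suc (Suc k)) x = 2*x*chebV (Suc k) x - chebV k x" by simp
  have IH1: "chebV (Suc k) x = Uz x (int (Suc k)) - Uz x (int k)" using 3(1) i1 by simp
  have IH2: "chebV k x = Uz x (int k) - Uz x (int k - 1)" using 3(2) by simp
  show ?case unfolding i1 e IH1 IH2 r1 r2 by (simp add: algebra_simps)
qed

lemma chebT_Uz: "chebT (Suc k) q = q * Uz q (int k) - Uz q (int k - 1)"
proof (induction k rule: nat_less_induct)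
  case (1 k)
  show ?case
  proof (cases k)
    case 0 then show ?thesis by simp
  next
    case (Suc l)
    show ?thesis
    proof (cases l)
      case 0 then show ?thesis using Suc by (simp add: chebU_int_def)
    next
      case (Suc p)
      have IH1: "chebT (Suc l) q = q * Uz q (int l) - Uz q (int l - 1)" using 1 \<open>k = Suc l\<close> by simp
      have IH2: "chebT (Suc p) q = q * Uz q (int p) - Uz q (int p - 1)" using 1 \<open>k = Suc l\<close> Suc by simp
      have e1: "chebT (Suc k) q = 2*q*chebT (Suc l) q - chebT (Suc p) q"
        using \<open>k = Suc l\<close> Suc by simp
      have r1: "Uz q (int k) = 2*q*Uz q (int l) - Uz q (int p)"
        using Uz_rec[of "int l" q] \<open>k = Suc l\<close> Suc by (simp add: add.commute)
      have r2: "Uz q (int k - 1) = 2*q*Uz q (int l - 1) - Uz q (int p - 1)"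
        using Uz_rec[of "int l - 1" q] \<open>k = Suc l\<close> Suc by (simp add: algebra_simps)
      show ?thesis unfolding e1 IH1 IH2 r1 r2 by (simp add: algebra_simps)
    qed
  qed
qed

lemma chebT_gt1_aux: assumes "q > 1" shows "1 \<le> chebT k q \<and> chebT k q < chebT (Suc k) q"
proof (induction k rule: nat_less_induct)
  case (1 k)
  show ?case
  proof (cases k)
    case 0 then show ?thesis using assms by simp
  next
    case (Suc l)
    have IH: "1 \<le> chebT l q \<and> chebT l q < chebT (Suc l) q" using 1 Suc by simp
    have e: "chebT (Suc k) q = 2*q*chebT k q - chebT l q" using Suc by simp
    have p: "chebT k q > 0" using IH Suc by simp
    have p': "chebT (Suc l) q > 0" using IH by simp
    have f: "2*q*chebT (Suc l) q > 2*1*chebT (Suc l) q" using assms p' by (intro mult_strict_right_mono) auto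
    have e': "chebT (Suc (Suc l)) q = 2*q*chebT (Suc l) q - chebT l q" by simp
    have "chebT (Suc l) q < chebT (Suc (Suc l)) q" unfolding e' using f IH by linarith
    then show ?thesis using IH Suc by simp
  qed
qed

lemma chebT_gt1: assumes "q > 1" "m \<ge> 1" shows "chebT m q > 1"
proof -
  obtain l where "m = Suc l" using assms(2) by (cases m) auto
  then show ?thesis using chebT_gt1_aux[OF assms(1), of l] chebT_gt1_aux[OF assms(1), of 0] by auto
qed

lemma sumU: "(\<Sum>j<k. Uz q (int j)) * (2*(q-1)) = Uz q (int k) - Uz q (int k - 1) - 1"
proof (induction k)
  case 0 then show ?case by simp
next
  case (Suc k)
  have r: "Uz q (int (Suc k)) = 2*q*Uz q (int k) - Uz q (int k - 1)"
    using Uz_rec[of "int k" q] by (simp add: add.commute)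
  have "(\<Sum>j<Suc k. Uz q (int j)) * (2*(q-1)) = (\<Sum>j<k. Uz q (int j)) * (2*(q-1)) + Uz q (int k) * (2*(q-1))"
    by (simp add: algebra_simps)
  also have "\<dots> = Uz q (int (Suc k)) - Uz q (int (Suc k) - 1) - 1" using Suc r by (simp add: algebra_simps)
  finally show ?case .
qed

lemma sum_real_id: "(\<Sum>j<k. real j) = real k * (real k - 1) / 2"
  by (induction k) (auto simp: field_simps)

lemma sum_real_sq: "(\<Sum>j<k. (real j)^2) = (real k - 1) * real k * (2 * real k - 1) / 6"
  by (induction k) (auto simp: field_simps power2_eq_square)


lemma Uz_rec': assumes "j \<ge> 1" shows "Uz q j = 2*q*Uz q (j-1) - Uz q (j-2)"
  using Uz_rec[of "j-1" q] assms by (simp add: algebra_simps)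

locale cyc =
  fixes m d :: nat and a c :: real
  assumes m2: "m \<ge> 2" and d1: "d \<ge> 1" and a0: "a > 0" and c0: "c > 0"

context cyc
begin

definition "qq = a * real d / (2*c) + 1"
definition "TT = chebT m qq"
definition "Vz j = Uz qq j - Uz qq (j-1)"
definition "SUm = (\<Sum>j<m. Uz qq (int j))"
definition coreK :: "int \<Rightarrow> real \<Rightarrow> real \<Rightarrow> real" where
 "coreK k t h = coreX (real m * real d) (real d) a c TT (of_int k) t h (Vz k) (Vz (int m - 1 - k))
     (Uz qq (k-1)) (Uz qq (int m - 1 - k)) (Vz (int m - 1)) (Uz qq (int m - 1))"

lemma qq_gt1: "qq > 1" using a0 c0 d1 unfolding qq_def by (simp add: field_simps)
lemma TT_gt1: "TT > 1" unfolding TT_def using chebT_gt1[OF qq_gt1] m2 by simp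

lemma TT_eq: "TT = qq * Uz qq (int m - 1) - Uz qq (int m - 2)"
proof -
  obtain l where l: "m = Suc l" using m2 by (cases m) auto
  have e: "int m - 1 = int l" "int m - 2 = int l - 1" using l by auto
  have "TT = chebT (Suc l) qq" unfolding TT_def using l by simp
  then show ?thesis unfolding e using chebT_Uz[of l qq] by simp
qed

lemma SUm_eq: "SUm = (2*qq*Uz qq (int m - 1) - Uz qq (int m - 2) - Uz qq (int m - 1) - 1)/(2*(qq-1))"
proof -
  have "SUm * (2*(qq-1)) = Uz qq (int m) - Uz qq (int m - 1) - 1" unfolding SUm_def by (rule sumU)
  moreover have "Uz qq (int m) = 2*qq*Uz qq (int m - 1) - Uz qq (int m - 2)"
    using Uz_rec'[of "int m" qq] m2 by simp
  ultimately show ?thesis using qq_gt1 by (simp add: field_simps)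
qed

lemma hyps: "real d \<noteq> 0" "c \<noteq> 0" "qq - 1 \<noteq> 0" "TT - 1 \<noteq> 0" "real m \<noteq> 0"
  "real m * real d = real m * real d" "qq = 1 + (qq-1)" "a = 2*c*(qq-1)/real d"
  "Uz qq (int m - 2) = qq * Uz qq (int m - 1) - 1 - (TT - 1)" "TT = 1 + (TT - 1)"
  "SUm = (2*qq*Uz qq (int m - 1) - Uz qq (int m - 2) - Uz qq (int m - 1) - 1)/(2*(qq-1))"
  using d1 c0 qq_gt1 TT_gt1 m2 TT_eq SUm_eq
  by (auto simp: qq_def field_simps)

lemma A1K: assumes "1 \<le> k" "k \<le> int m - 1" shows "coreK k (real d) h = coreK (k-1) 0 h"
proof -
  have r1: "Uz qq k = 2*qq*Uz qq (k-1) - Uz qq (k-2)" using Uz_rec'[of k qq] assms by simp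
  have r2: "Uz qq (int m - k) = 2*qq*Uz qq (int m - 1 - k) - Uz qq (int m - 2 - k)"
    using Uz_rec'[of "int m - k" qq] assms by (simp add: algebra_simps)
  have i: "int m - 1 - k - 1 = int m - 2 - k" "k - 1 - 1 = k - 2" "int m - 1 - (k - 1) = int m - k"
     "int m - k - 1 = int m - 1 - k" "int m - 1 - 1 = int m - 2" by auto
  have "coreK k (real d) h = coreX (real m * real d) (real d) a c TT (of_int k) (real d) h
     ((2*qq*Uz qq (k-1) - Uz qq (k-2)) - Uz qq (k-1)) (Uz qq (int m - 1 - k) - Uz qq (int m - 2 - k))
     (Uz qq (k-1)) (Uz qq (int m - 1 - k)) (Uz qq (int m - 1) - Uz qq (int m - 2)) (Uz qq (int m - 1))"
    unfolding coreK_def Vz_def i r1 ..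
  also have "\<dots> = coreX (real m * real d) (real d) a c TT (of_int k - 1) 0 h
     (Uz qq (k-1) - Uz qq (k-2)) ((2*qq*Uz qq (int m - 1 - k) - Uz qq (int m - 2 - k)) - Uz qq (int m - 1 - k))
     (Uz qq (k-2)) (2*qq*Uz qq (int m - 1 - k) - Uz qq (int m - 2 - k)) (Uz qq (int m - 1) - Uz qq (int m - 2)) (Uz qq (int m - 1))"
    by (rule A_generic[OF hyps])
  also have "\<dots> = coreK (k-1) 0 h"
    unfolding coreK_def Vz_def i r2 by simp
  finally show ?thesis .
qed
lemma A2K: "coreK 0 (real d) h = coreK (int m - 1) 0 h"
proof -
  have i: "int m - 1 - 1 = int m - 2" "int m - 1 - (int m - 1) = 0" by auto
  have "coreK 0 (real d) h = coreX (real m * real d) (real d) a c TT 0 (real d) h 1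
      (Uz qq (int m - 1) - Uz qq (int m - 2)) 0 (Uz qq (int m - 1)) (Uz qq (int m - 1) - Uz qq (int m - 2)) (Uz qq (int m - 1))"
    unfolding coreK_def Vz_def i by simp
  also have "\<dots> = coreX (real m * real d) (real d) a c TT (real m - 1) 0 h (Uz qq (int m - 1) - Uz qq (int m - 2)) 1
      (Uz qq (int m - 2)) 1 (Uz qq (int m - 1) - Uz qq (int m - 2)) (Uz qq (int m - 1))"
    by (rule A_wrap[OF hyps])
  also have "\<dots> = coreK (int m - 1) 0 h"
    unfolding coreK_def Vz_def i by simp
  finally show ?thesis .
qed

lemma sum_reflect: "(\<Sum>j<k. f (int k - 1 - int j)) = (\<Sum>j<k. f (int j))"
proof -
  have "(\<Sum>j<k. f (int j)) = (\<Sum>j\<in>{0..<k}. f (int j))" by (simp add: atLeast0LessThan)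
  also have "\<dots> = (\<Sum>j\<in>{0..<k}. f (int (k + 0 - Suc j)))" by (rule sum.atLeastLessThan_rev)
  also have "\<dots> = (\<Sum>j<k. f (int k - 1 - int j))"
    by (rule sum.cong) (auto simp: atLeast0LessThan of_nat_diff intro!: arg_cong[where f=f])
  finally show ?thesis by simp
qed

lemma sum_Uz_shift: "(\<Sum>j<k. Uz q (int j - 1)) = (\<Sum>j<k. Uz q (int j)) - Uz q (int k - 1)"
  by (induction k) auto

lemma CSum: "(\<Sum>j<m. coreK (int j) t h) = CSX (real m) (real m * real d) (real d) a c TT t h SUm (Vz (int m - 1)) (Uz qq (int m - 1))"
proof -
  define n where "n = real m * real d"
  define Vm1 where "Vm1 = Vz (int m - 1)"
  define Um1 where "Um1 = Uz qq (int m - 1)"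
  define dr where "dr = real d"
  define al where "al = ((1/(TT-1))*(- (2*c*dr/a)*(Vm1 - 1) - dr^2*Um1) + dr*h + n*h - n*dr + (2*dr - 3*dr + 2*h - n)*t + dr*(n-2*h))"
  define be where "be = 2*dr*t + dr*(n-2*h)"
  define ga where "ga = (1/(TT-1))*(n*(h-t))"
  define de where "de = (1/(TT-1))*((a*n/c)*t*(h-dr) - n*dr)"
  have RU: "(\<Sum>j<m. Uz qq (int m - 1 - int j)) = (\<Sum>j<m. Uz qq (int j))" using sum_reflect[of "\<lambda>j. Uz qq j" m] by simp
  have "(\<Sum>j<m. coreK (int j) t h) = (\<Sum>j<m. al + real j * be - (real d)^2 * (real j)^2
        + ga * (Vz (int j) - Vz (int m - 1 - int j)) - de * (Uz qq (int j - 1) + Uz qq (int m - 1 - int j)))"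
    by (rule sum.cong[OF refl]) (simp only: coreK_def coreX_sum_split al_def be_def ga_def de_def n_def Vm1_def Um1_def dr_def of_int_of_nat_eq)
  also have "\<dots> = real m * al + be * (\<Sum>j<m. real j) - (real d)^2 * (\<Sum>j<m. (real j)^2)
        + ga * ((\<Sum>j<m. Vz (int j)) - (\<Sum>j<m. Vz (int m - 1 - int j)))
        - de * ((\<Sum>j<m. Uz qq (int j - 1)) + (\<Sum>j<m. Uz qq (int m - 1 - int j)))"
    by (simp add: sum.distrib sum_subtractf sum_distrib_left sum_distrib_right algebra_simps)
  also have "\<dots> = real m * al + be * (real m * (real m - 1) / 2) - (real d)^2 * ((real m - 1) * real m * (2 * real m - 1) / 6)
        - de * (2 * SUm - Um1)"
    unfolding RU sum_real_id sum_real_sq sum_reflect[of Vz] sum_Uz_shift SUm_def Um1_def by simp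
  also have "\<dots> = CSX (real m) n (real d) a c TT t h SUm Vm1 Um1"
    unfolding CSX_def al_def be_def de_def dr_def by (Groebner_Basis.algebra)
  finally show ?thesis unfolding n_def Vm1_def Um1_def .
qed

lemma SphiSum: "(\<Sum>j<m. (real j * real d + h) * (real m * real d - real j * real d - h)) = Sphi (real m) (real m * real d) (real d) h"
proof -
  have "(\<Sum>j<m. (real j * real d + h) * (real m * real d - real j * real d - h))
     = (\<Sum>j<m. h*(real m * real d - h) + real j * (real d * (real m * real d - h) - real d * h) - real d^2 * (real j)^2)"
    by (rule sum.cong) (auto simp: algebra_simps power2_eq_square)
  also have "\<dots> = real m * (h*(real m * real d - h)) + (real d * (real m * real d - h) - real d * h) * (\<Sum>j<m. real j) - real d^2 * (\<Sum>j<m. (real j)^2)"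
    by (simp add: sum.distrib sum_subtractf sum_distrib_left sum_distrib_right algebra_simps)
  also have "\<dots> = Sphi (real m) (real m * real d) (real d) h"
    unfolding sum_real_id sum_real_sq Sphi_def by (Groebner_Basis.algebra)
  finally show ?thesis .
qed

lemma C1K: assumes "0 \<le> k" "k \<le> int m - 2"
  shows "c*(2*coreK k 0 h - coreK k 1 h - coreK (k+1) (real d - 1) h)/(2*c*(real m * real d))
   + a*((coreK k 0 h - (of_int k*real d+h)*(real m * real d-of_int k*real d-h))/(2*c*(real m * real d))
        - (1/real m)*((CSX (real m) (real m * real d) (real d) a c TT 0 h SUm (Vz (int m - 1)) (Uz qq (int m - 1))
           - Sphi (real m) (real m * real d) (real d) h)/(2*c*(real m * real d)))) = 0"
proof -
  have r1: "Uz qq (k+1) = 2*qq*Uz qq k - Uz qq (k-1)" using Uz_rec[of k qq] assms by simp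
  have r2: "Uz qq (int m - 3 - k) = 2*qq*Uz qq (int m - 2 - k) - Uz qq (int m - 1 - k)"
    using Uz_rec[of "int m - 2 - k" qq] assms by (simp add: algebra_simps)
  have i: "int m - 1 - k - 1 = int m - 2 - k" "k + 1 - 1 = k" "int m - 1 - (k + 1) = int m - 2 - k"
     "int m - 2 - k - 1 = int m - 3 - k" "int m - 1 - 1 = int m - 2" by auto
  have e1: "coreK k 0 h = coreX (real m * real d) (real d) a c TT (of_int k) 0 h (Uz qq k - Uz qq (k-1))
      (Uz qq (int m - 1 - k) - Uz qq (int m - 2 - k)) (Uz qq (k-1)) (Uz qq (int m - 1 - k))
      (Uz qq (int m - 1) - Uz qq (int m - 2)) (Uz qq (int m - 1))"
    unfolding coreK_def Vz_def i ..
  have e2: "coreK k 1 h = coreX (real m * real d) (real d) a c TT (of_int k) 1 h (Uz qq k - Uz qq (k-1))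
      (Uz qq (int m - 1 - k) - Uz qq (int m - 2 - k)) (Uz qq (k-1)) (Uz qq (int m - 1 - k))
      (Uz qq (int m - 1) - Uz qq (int m - 2)) (Uz qq (int m - 1))"
    unfolding coreK_def Vz_def i ..
  have e3: "coreK (k+1) (real d - 1) h = coreX (real m * real d) (real d) a c TT (of_int k + 1) (real d - 1) h
      ((2*qq*Uz qq k - Uz qq (k-1)) - Uz qq k)
      (Uz qq (int m - 2 - k) - (2*qq*Uz qq (int m - 2 - k) - Uz qq (int m - 1 - k))) (Uz qq k) (Uz qq (int m - 2 - k))
      (Uz qq (int m - 1) - Uz qq (int m - 2)) (Uz qq (int m - 1))"
    unfolding coreK_def Vz_def i r1 r2 by simp
  have e4: "Vz (int m - 1) = Uz qq (int m - 1) - Uz qq (int m - 2)" unfolding Vz_def i ..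
  show ?thesis unfolding e1 e2 e3 e4 by (rule C_generic[OF hyps])
qed

lemma C2K:
  shows "c*(2*coreK (int m - 1) 0 h - coreK (int m - 1) 1 h - coreK 0 (real d - 1) h)/(2*c*(real m * real d))
   + a*((coreK (int m - 1) 0 h - ((real m - 1)*real d+h)*(real m * real d-(real m - 1)*real d-h))/(2*c*(real m * real d))
        - (1/real m)*((CSX (real m) (real m * real d) (real d) a c TT 0 h SUm (Vz (int m - 1)) (Uz qq (int m - 1))
           - Sphi (real m) (real m * real d) (real d) h)/(2*c*(real m * real d)))) = 0"
proof -
  have i: "int m - 1 - 1 = int m - 2" "int m - 1 - (int m - 1) = 0" by auto
  have e1: "\<And>t. coreK (int m - 1) t h = coreX (real m * real d) (real d) a c TT (real m - 1) t h (Uz qq (int m - 1) - Uz qq (int m - 2)) 1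
      (Uz qq (int m - 2)) 1 (Uz qq (int m - 1) - Uz qq (int m - 2)) (Uz qq (int m - 1))"
    unfolding coreK_def Vz_def i by simp
  have e3: "coreK 0 (real d - 1) h = coreX (real m * real d) (real d) a c TT 0 (real d - 1) h 1
      (Uz qq (int m - 1) - Uz qq (int m - 2)) 0 (Uz qq (int m - 1)) (Uz qq (int m - 1) - Uz qq (int m - 2)) (Uz qq (int m - 1))"
    unfolding coreK_def Vz_def i by simp
  have e4: "Vz (int m - 1) = Uz qq (int m - 1) - Uz qq (int m - 2)" unfolding Vz_def i ..
  show ?thesis unfolding e1 e3 e4 by (rule C_wrap[OF hyps])
qed

lemma coreK_lin: "coreK k t h = coreK k 0 h + t * (coreK k 1 h - coreK k 0 h)"
  unfolding coreK_def by (rule coreX_lin)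

lemma sum_lin: "(\<Sum>t<dd. f0 + real t * f1) = real dd * f0 + (real dd * (real dd - 1) / 2) * f1"
  by (simp add: sum.distrib sum_distrib_right[symmetric] sum_real_id)

lemma DK: "(\<Sum>k<m. \<Sum>t<d. coreK (int k) (real t) h) + real m * real d * (real d^2 - (real m * real d)^2)/6 = 0"
proof -
  have "(\<Sum>k<m. \<Sum>t<d. coreK (int k) (real t) h) = (\<Sum>k<m. real d * coreK (int k) 0 h + (real d * (real d - 1)/2) * (coreK (int k) 1 h - coreK (int k) 0 h))"
    by (rule sum.cong, simp, subst coreK_lin, rule sum_lin)
  also have "\<dots> = real d * (\<Sum>k<m. coreK (int k) 0 h) + (real d * (real d - 1)/2) * ((\<Sum>k<m. coreK (int k) 1 h) - (\<Sum>k<m. coreK (int k) 0 h))"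
    by (simp only: sum.distrib sum_subtractf sum_distrib_left[symmetric])
  finally have X: "(\<Sum>k<m. \<Sum>t<d. coreK (int k) (real t) h) = real d * CSX (real m) (real m * real d) (real d) a c TT 0 h SUm (Vz (int m - 1)) (Uz qq (int m - 1))
     + (real d * (real d - 1)/2) * (CSX (real m) (real m * real d) (real d) a c TT 1 h SUm (Vz (int m - 1)) (Uz qq (int m - 1))
     - CSX (real m) (real m * real d) (real d) a c TT 0 h SUm (Vz (int m - 1)) (Uz qq (int m - 1)))" by (simp only: CSum)
  have e4: "Vz (int m - 1) = Uz qq (int m - 1) - Uz qq (int m - 2)" unfolding Vz_def by (simp add: algebra_simps)
  show ?thesis unfolding X e4 by (rule D_sum[OF hyps])
qed

end


lemma sum_split_blocks: "(\<Sum>x<m*d. f x) = (\<Sum>j<m. \<Sum>t<d. f (j*d + t)) " for f :: "nat \<Rightarrow> real"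
proof -
  have "(\<Sum>x<m*d. f x) = (\<Sum>j<m. sum f {j*d..<j*d+d})" by (rule sum.nat_group[symmetric])
  also have "\<dots> = (\<Sum>j<m. \<Sum>t<d. f (j*d + t))"
  proof (rule sum.cong[OF refl])
    fix j
    have "sum f {j*d..<j*d+d} = sum f {0+j*d..<d+j*d}" by (simp add: add.commute)
    also have "\<dots> = (\<Sum>t\<in>{0..<d}. f (t + j*d))" by (rule sum.shift_bounds_nat_ivl)
    finally show "sum f {j*d..<j*d+d} = (\<Sum>t<d. f (j*d + t))" by (simp add: atLeast0LessThan add.commute)
  qed
  finally show ?thesis .
qed

lemma sum_mod_reflect:
  assumes "(n::nat) > 0"
  shows "(\<Sum>z<n. f (nat ((s - int z) mod int n))) = (\<Sum>z<n. f z)"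
proof (rule sum.reindex_bij_witness[where i="\<lambda>z. nat ((s - int z) mod int n)" and j="\<lambda>z. nat ((s - int z) mod int n)"])
  fix z assume z: "z \<in> {..<n}"
  have "(s - (s - int z) mod int n) mod int n = (s - (s - int z)) mod int n" by (simp add: mod_diff_right_eq)
  also have "\<dots> = int z" using z by simp
  finally show "nat ((s - int (nat ((s - int z) mod int n))) mod int n) = z" using assms by simp
  show "nat ((s - int z) mod int n) \<in> {..<n}" using assms by (simp add: nat_less_iff)
  show "nat ((s - int z) mod int n) \<in> {..<n}" using assms by (simp add: nat_less_iff)
  have "(s - (s - int z) mod int n) mod int n = (s - (s - int z)) mod int n" by (simp add: mod_diff_right_eq)
  also have "\<dots> = int z" using z by simp
  finally show "nat ((s - int (nat ((s - int z) mod int n))) mod int n) = z" using assms by simp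
  show "f (nat ((s - int z) mod int n)) = f (nat ((s - int z) mod int n))" ..
qed

definition phi :: "real \<Rightarrow> real \<Rightarrow> real" where "phi n v = v * (n - v)"

lemma phi_cong:
  fixes v w :: int and n :: nat
  assumes "\<bar>v\<bar> < int n" "\<bar>w\<bar> < int n" "v mod int n = w mod int n"
  shows "phi (real n) (of_int \<bar>v\<bar>) = phi (real n) (of_int \<bar>w\<bar>)"
proof -
  have "int n dvd (v - w)" using assms(3) by (simp add: mod_eq_dvd_iff)
  then obtain j where j: "v - w = int n * j" by (auto elim: dvdE)
  have "\<bar>int n * j\<bar> < 2 * int n" using assms(1,2) j by linarith
  then have "int n * \<bar>j\<bar> < int n * 2" by (simp add: abs_mult)
  then have "\<bar>j\<bar> < 2" by (simp add: mult_less_cancel_left)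
  then have "j = 0 \<or> j = 1 \<or> j = -1" by auto
  then show ?thesis
  proof (elim disjE)
    assume "j = 0" then show ?thesis using j by simp
  next
    assume "j = 1" then have "v = w + int n" using j by simp
    then have "\<bar>v\<bar> = int n - \<bar>w\<bar>" using assms by auto
    then have h: "(of_int \<bar>v\<bar> :: real) = real n - of_int \<bar>w\<bar>" by simp
    show ?thesis unfolding phi_def h by (simp add: algebra_simps)
  next
    assume "j = -1" then have "w = v + int n" using j by simp
    then have "\<bar>w\<bar> = int n - \<bar>v\<bar>" using assms by auto
    then have h: "(of_int \<bar>w\<bar> :: real) = real n - of_int \<bar>v\<bar>" by simp
    show ?thesis unfolding phi_def h by (simp add: algebra_simps)
  qed
qed

lemma mult_entry:
  assumes "A \<in> carrier_mat nr nc" "B \<in> carrier_mat nc k" "i < nr" "j < k"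
  shows "(A*B)$$(i,j) = (\<Sum>l<nc. A$$(i,l) * B$$(l,j))"
  using assms by (simp add: scalar_prod_def atLeast0LessThan)


lemma succ_mod: "z < n \<Longrightarrow> (z+1) mod n = (if z + 1 = n then 0 else z+1)" for z n :: nat
  by auto

lemma pred_mod: "x < n \<Longrightarrow> (x+n-1) mod n = (if x = 0 then n - 1 else x - 1)" for x n :: nat
proof -
  assume x: "x < n"
  show ?thesis
  proof (cases "x = 0")
    case True then show ?thesis using x by simp
  next
    case False
    then have "x + n - 1 = (x - 1) + n" using x by simp
    then have "(x + n - 1) mod n = ((x - 1) + n) mod n" by simp
    also have "\<dots> = x - 1" using x by simp
    finally show ?thesis using False by simp
  qed
qed

lemma succ_pred_conv: fixes x z n :: nat assumes "z < n" "x < n" shows "(x = (z+1) mod n) = (z = (x+n-1) mod n)"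
proof -
  have A: "(z+1) mod n = (if z+1 = n then 0 else z+1)" using succ_mod assms by blast
  have B: "(x+n-1) mod n = (if x = 0 then n-1 else x-1)" using pred_mod assms by blast
  show ?thesis unfolding A B using assms by auto
qed

lemma gsecond:
  fixes n :: nat and c :: real and D :: int
  assumes n2: "n \<ge> 2" and c0: "c > 0" and D: "0 \<le> D" "D < int n"
  defines "g \<equiv> \<lambda>v::int. (real n^2 - 1 - 6 * phi (real n) (of_int v)) / (12*c*real n)"
  shows "c * (2 * g D - g ((D+1) mod int n) - g ((D-1) mod int n)) = (if D = 0 then 1 else 0) - 1/real n"
proof (cases "D = 0")
  case True
  have e: "(D+1) mod int n = 1" "(D - 1) mod int n = int n - 1" using True n2 by (auto simp: zmod_minus1)
  show ?thesis unfolding e using True c0 n2 unfolding g_def phi_def by (simp add: field_simps)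
next
  case False
  have m1: "(D-1) mod int n = D - 1" using False D by simp
  have p1: "g ((D+1) mod int n) = g (D+1)"
  proof (cases "D + 1 = int n")
    case True then show ?thesis unfolding g_def phi_def by simp
  next
    case False then have "(D+1) mod int n = D + 1" using D by simp
    then show ?thesis by simp
  qed
  show ?thesis unfolding p1 m1 using False c0 n2 unfolding g_def phi_def by (simp add: field_simps)
qed

context cyc
begin

lemma n2: "m * d \<ge> 2" using m2 d1 by (metis le_trans mult.right_neutral mult_le_mono2)

definition "gg v = (real (m*d)^2 - 1 - 6 * phi (real (m*d)) (of_int v)) / (12*c*real (m*d))"

lemma G_val: assumes "x < m*d" "y < m*d"
  shows "Gmat (m*d) c $$ (x,y) = gg ((int x - int y) mod int (m*d))"
proof -
  have "int x < int (m*d)" "int y < int (m*d)" using assms by (simp only: of_nat_less_iff)+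
  then have b1: "\<bar>int x - int y\<bar> < int (m*d)" by (simp only: abs_less_iff simp_thms; linarith)
  have p: "(0::int) < int (m*d)" using n2 by (simp only: of_nat_0_less_iff)
  have b2: "\<bar>(int x - int y) mod int (m*d)\<bar> < int (m*d)"
    using pos_mod_bound[OF p, of "int x - int y"] pos_mod_sign[OF p, of "int x - int y"] by (simp only: abs_less_iff simp_thms; linarith)
  have "phi (real (m*d)) (of_int \<bar>int x - int y\<bar>) = phi (real (m*d)) (of_int \<bar>(int x - int y) mod int (m*d)\<bar>)"
    by (rule phi_cong[OF b1 b2]) simp
  moreover have "real (nat \<bar>int x - int y\<bar>) = of_int \<bar>int x - int y\<bar>" by simp
  moreover have "\<bar>(int x - int y) mod int (m*d)\<bar> = (int x - int y) mod int (m*d)" using pos_mod_sign[OF p] by (rule abs_of_nonneg)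
  ultimately show ?thesis using assms unfolding Gmat_def gg_def phi_def by simp
qed

lemma G_sym: "x < m*d \<Longrightarrow> y < m*d \<Longrightarrow> Gmat (m*d) c $$ (x,y) = Gmat (m*d) c $$ (y,x)"
  unfolding Gmat_def by (simp add: abs_minus_commute)

lemma G_row: assumes "x < m*d" "y < m*d"
  shows "c * (2 * Gmat (m*d) c $$ (x,y) - Gmat (m*d) c $$ ((x+1) mod (m*d), y) - Gmat (m*d) c $$ ((x + m*d - 1) mod (m*d), y))
     = (if x = y then 1 else 0) - 1 / real (m*d)"
proof -
  define n where "n = m*d"
  have n0: "n > 0" "n \<ge> 2" using n2 unfolding n_def by linarith+
  define D where "D = (int x - int y) mod int n"
  have D: "0 \<le> D" "D < int n" using n0 unfolding D_def by auto
  have e1: "(int ((x+1) mod n) - int y) mod int n = (D + 1) mod int n"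
    unfolding D_def by (simp add: of_nat_mod mod_simps algebra_simps)
  have e2: "(int ((x+n-1) mod n) - int y) mod int n = (D - 1) mod int n"
  proof -
    have h: "int (x + n - 1) = int x - 1 + int n" using n0 by simp
    have "(int ((x+n-1) mod n) - int y) mod int n = (int (x+n-1) - int y) mod int n"
      by (simp add: of_nat_mod mod_diff_left_eq)
    also have "\<dots> = ((int x - int y - 1) + int n) mod int n" unfolding h by (simp add: algebra_simps)
    also have "\<dots> = (int x - int y - 1) mod int n" by simp
    also have "\<dots> = (D - 1) mod int n" unfolding D_def by (simp add: mod_diff_left_eq)
    finally show ?thesis .
  qed
  have "(D = 0) = (x = y)"
  proof -
    have "D = 0 \<longleftrightarrow> int x mod int n = int y mod int n" unfolding D_def by (simp add: mod_eq_dvd_iff dvd_eq_mod_eq_0)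
    also have "\<dots> \<longleftrightarrow> x = y"
    proof -
      have xn: "x < n" "y < n" using assms n_def by simp_all
      then have "int x mod int n = int x" "int y mod int n = int y" by simp_all
      then show ?thesis by simp
    qed
    finally show ?thesis .
  qed
  moreover have "c * (2 * gg D - gg ((D+1) mod int n) - gg ((D-1) mod int n)) = (if D = 0 then 1 else 0) - 1/real n"
    using gsecond[OF n0(2) c0 D] unfolding gg_def n_def by simp
  moreover have xs: "x < m*d" "y < m*d" "(x+1) mod (m*d) < m*d" "(x+m*d-1) mod (m*d) < m*d" using assms n0 n_def by auto
  moreover have "Gmat (m*d) c $$ (x,y) = gg D" using G_val[OF xs(1,2)] D_def n_def by simp
  moreover have "Gmat (m*d) c $$ ((x+1) mod (m*d), y) = gg ((D+1) mod int n)" using G_val[OF xs(3) xs(2)] e1 n_def by simp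
  moreover have "Gmat (m*d) c $$ ((x+m*d-1) mod (m*d), y) = gg ((D-1) mod int n)" using G_val[OF xs(4) xs(2)] e2 n_def by simp
  ultimately show ?thesis unfolding n_def by simp
qed

lemma G_col: assumes "x < m*d" "y < m*d"
  shows "c * (2 * Gmat (m*d) c $$ (x,y) - Gmat (m*d) c $$ (x, (y+1) mod (m*d)) - Gmat (m*d) c $$ (x, (y + m*d - 1) mod (m*d)))
     = (if x = y then 1 else 0) - 1 / real (m*d)"
proof -
  have p: "m*d > 0" using m2 d1 by simp
  have "(y+1) mod (m*d) < m*d" "(y + m*d - 1) mod (m*d) < m*d" using p by auto
  then show ?thesis using G_row[OF assms(2,1)] G_sym assms by (auto)
qed

lemma gg_sum: "(\<Sum>t<m*d. gg (int t)) = 0"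
proof -
  define n where "n = m*d"
  have n0: "real n > 0" using m2 d1 unfolding n_def by simp
  have "(\<Sum>t<n. gg (int t)) = (\<Sum>t<n. (real n^2 - 1 - 6 * (real n * real t - (real t)^2)) / (12*c*real n))"
    unfolding gg_def phi_def n_def by (simp add: algebra_simps power2_eq_square)
  also have "\<dots> = (real n * (real n^2 - 1) - 6 * (real n * (\<Sum>t<n. real t) - (\<Sum>t<n. (real t)^2))) / (12*c*real n)"
    by (simp add: sum_divide_distrib[symmetric] sum_subtractf sum_distrib_left)
  also have "\<dots> = 0" unfolding sum_real_id sum_real_sq using n0 by (simp add: field_simps power2_eq_square power3_eq_cube)
  finally show ?thesis unfolding n_def .
qed

lemma G_rowsum: assumes "x < m*d" shows "(\<Sum>z<m*d. Gmat (m*d) c $$ (x,z)) = 0"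
proof -
  have p: "m*d > 0" using m2 d1 by simp
  have "(\<Sum>z<m*d. Gmat (m*d) c $$ (x,z)) = (\<Sum>z<m*d. gg (int (nat ((int x - int z) mod int (m*d)))))"
    apply (rule sum.cong[OF refl]) using G_val assms p by simp
  also have "\<dots> = (\<Sum>z<m*d. gg (int z))" by (rule sum_mod_reflect[OF p, where f="\<lambda>t. gg (int t)"])
  finally show ?thesis using gg_sum by simp
qed

lemma G_colsum: assumes "y < m*d" shows "(\<Sum>x<m*d. Gmat (m*d) c $$ (x,y)) = 0"
proof -
  have "(\<Sum>x<m*d. Gmat (m*d) c $$ (x,y)) = (\<Sum>x<m*d. Gmat (m*d) c $$ (y,x))"
    by (rule sum.cong[OF refl]) (use G_sym assms in auto)
  then show ?thesis using G_rowsum[OF assms] by simp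
qed

definition "Lm = mat (m*d) (m*d) (\<lambda>(x,z). c*((if z = x then 2 else 0) - (if z = (x+1) mod (m*d) then 1 else 0) - (if x = (z+1) mod (m*d) then 1 else 0)))"

lemma L_ent: assumes "x < m*d" "z < m*d"
  shows "Lm $$ (x,z) = c * ((if z = x then 2 else 0) - (if z = (x+1) mod (m*d) then 1 else 0) - (if z = (x + m*d - 1) mod (m*d) then 1 else 0))"
  using assms unfolding Lm_def by (simp only: index_mat split succ_pred_conv[OF assms(2,1)] refl if_True)

lemma sum_delta_real: "(w::nat) < n \<Longrightarrow> (\<Sum>z<n. (if z = w then 1 else 0) * (f z::real)) = f w"
proof -
  assume "w < n"
  have "(\<Sum>z<n. (if z = w then 1 else 0) * (f z::real)) = (\<Sum>z<n. if z = w then f z else 0)"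
    by (rule sum.cong) auto
  also have "\<dots> = f w" using \<open>w < n\<close> by (simp add: sum.delta)
  finally show ?thesis .
qed

lemma L_left: assumes "x < m*d"
  shows "(\<Sum>z<m*d. Lm $$ (x,z) * f z) = c * (2 * f x - f ((x+1) mod (m*d)) - f ((x + m*d - 1) mod (m*d)))"
proof -
  have p: "m*d > 0" using m2 d1 by simp
  have "(\<Sum>z<m*d. Lm $$ (x,z) * f z) = (\<Sum>z<m*d. c * (2 * ((if z = x then 1 else 0) * f z) - (if z = (x+1) mod (m*d) then 1 else 0) * f z - (if z = (x + m*d - 1) mod (m*d) then 1 else 0) * f z))"
    apply (rule sum.cong[OF refl])
    apply (subst L_ent[OF assms]) apply simp
    by (simp add: algebra_simps)
  also have "\<dots> = c * (2 * (\<Sum>z<m*d. (if z = x then 1 else 0) * f z) - (\<Sum>z<m*d. (if z = (x+1) mod (m*d) then 1 else 0) * f z) - (\<Sum>z<m*d. (if z = (x + m*d - 1) mod (m*d) then 1 else 0) * f z))"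
    by (simp only: sum_subtractf sum_distrib_left[symmetric])
  also have "\<dots> = c * (2 * f x - f ((x+1) mod (m*d)) - f ((x + m*d - 1) mod (m*d)))"
    using assms p by (simp only: sum_delta_real[OF mod_less_divisor[OF p]] sum_delta_real[OF assms])
  finally show ?thesis .
qed

lemma L_ent2: assumes "z < m*d" "y < m*d"
  shows "Lm $$ (z,y) = c * ((if z = y then 2 else 0) - (if z = (y + m*d - 1) mod (m*d) then 1 else 0) - (if z = (y+1) mod (m*d) then 1 else 0))"
proof -
  have "(y = z) = (z = y)" by auto
  then show ?thesis using assms unfolding Lm_def by (simp only: index_mat split succ_pred_conv[OF assms(1,2)])
qed

lemma L_right: assumes "y < m*d"
  shows "(\<Sum>z<m*d. f z * Lm $$ (z,y)) = c * (2 * f y - f ((y + m*d - 1) mod (m*d)) - f ((y+1) mod (m*d)))"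
proof -
  have p: "m*d > 0" using m2 d1 by simp
  have "(\<Sum>z<m*d. f z * Lm $$ (z,y)) = (\<Sum>z<m*d. c * (2 * ((if z = y then 1 else 0) * f z) - (if z = (y + m*d - 1) mod (m*d) then 1 else 0) * f z - (if z = (y+1) mod (m*d) then 1 else 0) * f z))"
    apply (rule sum.cong[OF refl])
    apply (subst L_ent2[OF _ assms]) apply simp
    by (simp add: algebra_simps)
  also have "\<dots> = c * (2 * (\<Sum>z<m*d. (if z = y then 1 else 0) * f z) - (\<Sum>z<m*d. (if z = (y + m*d - 1) mod (m*d) then 1 else 0) * f z) - (\<Sum>z<m*d. (if z = (y+1) mod (m*d) then 1 else 0) * f z))"
    by (simp only: sum_subtractf sum_distrib_left[symmetric])
  also have "\<dots> = c * (2 * f y - f ((y + m*d - 1) mod (m*d)) - f ((y+1) mod (m*d)))"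
    using assms p by (simp only: sum_delta_real[OF mod_less_divisor[OF p]] sum_delta_real[OF assms])
  finally show ?thesis .
qed

end


lemma pairs_Suc: "pairs (Suc k) = pairs k @ map (\<lambda>i. (i,k)) [0..<k]"
  unfolding pairs_def by (simp add: map_concat)

lemma sum_pairs: "(\<Sum>p<length (pairs k). f (pairs k ! p)) = (\<Sum>j<k. \<Sum>i<j. f (i,j))"
proof -
  have "(\<Sum>p<length (pairs k). f (pairs k ! p)) = sum_list (map f (pairs k))"
    by (simp add: sum_list_sum_nth atLeast0LessThan)
  also have "\<dots> = (\<Sum>j<k. \<Sum>i<j. f (i,j))"
  proof (induction k)
    case 0 then show ?case by (simp add: pairs_def)
  next
    case (Suc k)
    have "sum_list (map (\<lambda>i. f (i,k)) [0..<k]) = (\<Sum>i<k. f (i,k))"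
      by (simp add: sum_list_sum_nth atLeast0LessThan)
    then show ?case using Suc by (simp add: pairs_Suc comp_def)
  qed
  finally show ?thesis .
qed

lemma length_pairs: "length (pairs k) = k choose 2"
proof -
  have "length (pairs k) = (\<Sum>j<k. \<Sum>i<j. (1::nat))"
    using sum_pairs[where k=k and f="\<lambda>_. (1::nat)"] by simp
  also have "\<dots> = (\<Sum>j<k. j)" by simp
  also have "\<dots> = k choose 2" by (induction k) (simp_all add: numeral_2_eq_2)
  finally show ?thesis .
qed

definition Eind :: "nat \<Rightarrow> nat \<Rightarrow> real" where "Eind al i = (if i = al then 1 else 0)"

lemma sum_Eind: "(\<Sum>i<M. Eind al i) = (if al < M then 1 else 0)"
  unfolding Eind_def by (simp add: sum.delta)

lemma sum_Eind2: "(\<Sum>i<M. Eind al i * Eind be i) = (if al = be \<and> al < M then 1 else 0)"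
proof -
  have "(\<Sum>i<M. Eind al i * Eind be i) = (\<Sum>i<M. if i = al then (if al = be then 1 else 0) else 0)"
    by (rule sum.cong) (auto simp: Eind_def)
  then show ?thesis by (simp add: sum.delta)
qed

lemma pair_sum: "(\<Sum>j<M. \<Sum>i<j. (Eind al i - Eind al j)*(Eind be i - Eind be j))
   = (if al = be then (if al < M then real M - 1 else 0) else (if al < M \<and> be < M then -1 else 0))"
proof (induction M)
  case 0 then show ?case by simp
next
  case (Suc M)
  have "(\<Sum>i<M. (Eind al i - Eind al M)*(Eind be i - Eind be M))
      = (\<Sum>i<M. Eind al i * Eind be i) - Eind be M * (\<Sum>i<M. Eind al i) - Eind al M * (\<Sum>i<M. Eind be i) + real M * (Eind al M * Eind be M)"
    by (simp add: algebra_simps sum.distrib sum_subtractf sum_distrib_left)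
  also have "\<dots> = (if al = be \<and> al < M then 1 else 0) - Eind be M * (if al < M then 1 else 0) - Eind al M * (if be < M then 1 else 0) + real M * (Eind al M * Eind be M)"
    unfolding sum_Eind sum_Eind2 ..
  finally have st: "(\<Sum>i<M. (Eind al i - Eind al M)*(Eind be i - Eind be M)) = (if al = be \<and> al < M then 1 else 0) - Eind be M * (if al < M then 1 else 0) - Eind al M * (if be < M then 1 else 0) + real M * (Eind al M * Eind be M)" .
  show ?case unfolding sum.lessThan_Suc Suc st by (auto simp: Eind_def)
qed

context cyc
begin

lemma P_carrier: "Pimat m d a \<in> carrier_mat (m*d) (m choose 2)"
  unfolding Pimat_def by simp

lemma ind_Eind: assumes "x < m*d" "i < m"
  shows "(if x = i*d then 1 else 0) = (if x mod d = 0 then Eind (x div d) i else (0::real))"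
proof -
  have d0: "d > 0" using d1 by simp
  have "(x = i*d) = (x mod d = 0 \<and> x div d = i)"
  proof
    assume "x = i*d" then show "x mod d = 0 \<and> x div d = i" using d0 by simp
  next
    assume h: "x mod d = 0 \<and> x div d = i"
    then show "x = i*d" using div_mult_mod_eq[of x d] by simp
  qed
  then show ?thesis unfolding Eind_def by auto
qed

lemma PP_ent: assumes x: "x < m*d" and w: "w < m*d"
  shows "(Pimat m d a * transpose_mat (Pimat m d a)) $$ (x,w)
     = (if x mod d = 0 \<and> w mod d = 0 then a * ((if x = w then 1 else 0) - 1 / real m) else 0)"
proof -
  define P where "P = Pimat m d a"
  define b where "b = m choose 2"
  have lb: "length (pairs m) = b" unfolding b_def by (rule length_pairs)
  define ex where "ex = (\<lambda>i::nat. if x = i*d then 1 else (0::real))"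
  define ew where "ew = (\<lambda>i::nat. if w = i*d then 1 else (0::real))"
  have sq: "sqrt (a / real m) * sqrt (a / real m) = a / real m" using a0 by simp
  have "(P * transpose_mat P) $$ (x,w) = (\<Sum>p<b. P $$ (x,p) * transpose_mat P $$ (p,w))"
    apply (rule mult_entry) using P_carrier x w unfolding P_def b_def by auto
  also have "\<dots> = (\<Sum>p<length (pairs m). (\<lambda>(i,j). (a / real m) * ((ex i - ex j) * (ew i - ew j))) (pairs m ! p))"
  proof (rule sum.cong)
    show "{..<b} = {..<length (pairs m)}" using lb by simp
  next
    fix p assume p: "p \<in> {..<length (pairs m)}"
    obtain i j where ij: "pairs m ! p = (i,j)" by fastforce
    have e1: "P $$ (x,p) = sqrt (a / real m) * (ex i - ex j)" using x p lb ij unfolding P_def Pimat_def ex_def b_def by simp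
    have e2: "transpose_mat P $$ (p,w) = sqrt (a / real m) * (ew i - ew j)"
      using w p lb ij unfolding P_def Pimat_def ew_def b_def by simp
    have "sqrt (a / real m) * (ex i - ex j) * (sqrt (a / real m) * (ew i - ew j)) = (sqrt (a / real m) * sqrt (a / real m)) * ((ex i - ex j) * (ew i - ew j))"
      by (simp only: ac_simps)
    then show "P $$ (x,p) * transpose_mat P $$ (p,w) = (\<lambda>(i,j). (a / real m) * ((ex i - ex j) * (ew i - ew j))) (pairs m ! p)"
      unfolding ij e1 e2 sq by simp
  qed
  also have "\<dots> = (\<Sum>j<m. \<Sum>i<j. (a / real m) * ((ex i - ex j) * (ew i - ew j)))"
    using sum_pairs[where k=m and f="\<lambda>(i,j). (a / real m) * ((ex i - ex j) * (ew i - ew j))"] by simp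
  also have "\<dots> = (a / real m) * (\<Sum>j<m. \<Sum>i<j. (ex i - ex j) * (ew i - ew j))"
    by (simp add: sum_distrib_left)
  also have "(\<Sum>j<m. \<Sum>i<j. (ex i - ex j) * (ew i - ew j)) =
      (\<Sum>j<m. \<Sum>i<j. (if x mod d = 0 then Eind (x div d) i - Eind (x div d) j else 0) * (if w mod d = 0 then Eind (w div d) i - Eind (w div d) j else 0))"
    apply (rule sum.cong[OF refl], rule sum.cong[OF refl])
    unfolding ex_def ew_def using ind_Eind x w by auto
  finally have X: "(P * transpose_mat P) $$ (x,w) = a / real m * (\<Sum>j<m. \<Sum>i<j. (if x mod d = 0 then Eind (x div d) i - Eind (x div d) j else 0) * (if w mod d = 0 then Eind (w div d) i - Eind (w div d) j else 0))" .
  have xd: "x div d < m" "w div d < m" using x w d1 by (auto simp: div_less_iff_less_mult mult.commute)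
  show ?thesis
  proof (cases "x mod d = 0 \<and> w mod d = 0")
    case True
    have "(x = w) = (x div d = w div d)" using True by (metis div_mult_mod_eq add_0_right)
    have S: "(\<Sum>j<m. \<Sum>i<j. (if x mod d = 0 then Eind (x div d) i - Eind (x div d) j else 0) * (if w mod d = 0 then Eind (w div d) i - Eind (w div d) j else 0))
       = (if x div d = w div d then real m - 1 else -1)"
      using True pair_sum[where M=m and al="x div d" and be="w div d"] xd by simp
    show ?thesis unfolding P_def[symmetric] X S using True \<open>(x = w) = (x div d = w div d)\<close> m2
      by (auto simp: field_simps)
  next
    case False
    then show ?thesis unfolding P_def[symmetric] X by auto
  qed
qed

end


context cyc
begin

lemma BE: assumes k: "k < m" and i0: "i0 < d" and h: "h < d"
  shows "blockEntry m d a c (k+1) (i0+1) h = (coreK (int k) (real i0) (real h)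
     - phi (real m * real d) (of_int \<bar>int i0 - int k * int d - int h\<bar>))/(2*c*(real m*real d))
     + (real d^2 - 1)/(12*c*(real m * real d))"
proof -
  have q: "a * real d / (2 * c) + 1 = qq" unfolding qq_def ..
  have i: "int (m - Suc k) = int m - 1 - int k" "int m - 1 - int k - 1 = int m - 2 - int k"
    "int (m - 1) = int m - 1" "int m - 1 - 1 = int m - 2" using k m2 by auto
  have c1: "chebV (k + 1 - 1) qq = Vz (int k)" unfolding Vz_def by (simp add: chebV_Uz)
  have i2: "int m - 2 - int k = int m - int k - 2" by simp
  have c2: "chebV (m - (k+1)) qq = Vz (int m - 1 - int k)" unfolding Vz_def using chebV_Uz[of "m - Suc k" qq] i i2 by simp
  have c3: "chebU_int (int (k+1) - 2) qq = Uz qq (int k - 1)" by (simp add: algebra_simps)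
  have c4: "chebU (m - (k+1)) qq = Uz qq (int m - 1 - int k)" using Uz_nat[where q=qq and k="m - Suc k"] i by simp
  have c5: "chebV (m - 1) qq = Vz (int m - 1)" unfolding Vz_def using chebV_Uz[of "m - 1" qq] i by simp
  have c6: "chebU (m - 1) qq = Uz qq (int m - 1)" using Uz_nat[where q=qq and k="m - 1"] i by simp
  have c7: "chebT m qq = TT" unfolding TT_def ..
  have l: "real (nat \<bar>int (i0+1) - 1 - (int (k+1) - 1) * int d - int h\<bar>) = of_int \<bar>int i0 - int k * int d - int h\<bar>"
    by simp
  have r: "real (k+1) = real k + 1" "real (i0 + 1) = real i0 + 1" "real (m*d) = real m * real d" by auto
  show ?thesis
    unfolding blockEntry_def Let_def q c1 c2 c3 c4 c5 c6 c7 l r coreK_def coreX_def phi_def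
    by (simp add: field_simps) (Groebner_Basis.algebra)?
qed

definition kb :: "nat \<Rightarrow> nat \<Rightarrow> nat" where "kb s r = nat ((int s - int r) mod int m)"
definition Nf :: "nat \<Rightarrow> nat \<Rightarrow> real" where
  "Nf x y = blockEntry m d a c (kb (y div d) (x div d) + 1) (x mod d + 1) (y mod d)"
definition HB :: "int \<Rightarrow> real \<Rightarrow> nat \<Rightarrow> real" where
  "HB k t h = (coreK k t (real h) + (real d^2 - (real m * real d)^2)/6)/(2*c*(real m*real d))"
definition Hf :: "nat \<Rightarrow> nat \<Rightarrow> real" where
  "Hf x y = HB (int (kb (y div d) (x div d))) (real (x mod d)) (y mod d)"

lemma kb_lt: "kb s r < m" unfolding kb_def using m2 by (simp add: nat_less_iff)
lemma kb_int: "int (kb s r) = (int s - int r) mod int m" unfolding kb_def using m2 by simp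

lemma N_decomp: assumes x: "x < m*d" and y: "y < m*d"
  shows "Nf x y = Gmat (m*d) c $$ (x,y) + Hf x y"
proof -
  define r where "r = x div d"
  define t where "t = x mod d"
  define s where "s = y div d"
  define h where "h = y mod d"
  define K where "K = kb s r"
  have d0: "d > 0" using d1 by simp
  have t: "t < d" "h < d" unfolding t_def h_def using d0 by auto
  have K: "K < m" unfolding K_def by (rule kb_lt)
  have xe: "int x = int r * int d + int t" unfolding r_def t_def by (metis div_mult_mod_eq of_nat_add of_nat_mult)
  have ye: "int y = int s * int d + int h" unfolding s_def h_def by (metis div_mult_mod_eq of_nat_add of_nat_mult)
  define v where "v = int t - int K * int d - int h"
  define w where "w = int x - int y"
  have Kd: "int K * int d = ((int s - int r) * int d) mod (int m * int d)"
    unfolding K_def kb_int by (simp add: mult_mod_left)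
  have "v mod (int m * int d) = ((int t - int h) - ((int s - int r) * int d) mod (int m * int d)) mod (int m * int d)"
    unfolding v_def Kd by (simp add: algebra_simps)
  also have "\<dots> = ((int t - int h) - (int s - int r) * int d) mod (int m * int d)" by (rule mod_diff_right_eq)
  also have "(int t - int h) - (int s - int r) * int d = w" unfolding w_def xe ye by (simp add: algebra_simps)
  finally have vw: "v mod int (m*d) = w mod int (m*d)" by simp
  have "int K \<le> int m - 1" using K by simp
  then have "int K * int d \<le> (int m - 1) * int d" by (rule mult_right_mono) simp
  then have Kd2: "int K * int d \<le> int m * int d - int d" by (simp add: algebra_simps)
  have md: "int m * int d \<ge> 2 * int d" using m2 by (intro mult_right_mono) auto
  have tt: "int t < int d" "int h < int d" "int t \<ge> 0" "int h \<ge> 0" "int K * int d \<ge> 0" using t by auto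
  have "int (m*d) = int m * int d" by simp
  then have bv: "\<bar>v\<bar> < int (m*d)" unfolding v_def using tt Kd2 md by (simp only: abs_less_iff, intro conjI; linarith)
  have "int x < int (m*d)" "int y < int (m*d)" using x y by (simp only: of_nat_less_iff)+
  then have bw: "\<bar>w\<bar> < int (m*d)" unfolding w_def by (simp only: abs_less_iff simp_thms; linarith)
  have ph: "phi (real (m*d)) (of_int \<bar>v\<bar>) = phi (real (m*d)) (of_int \<bar>w\<bar>)" by (rule phi_cong[OF bv bw vw])
  have "Nf x y = blockEntry m d a c (K+1) (t+1) h" unfolding Nf_def K_def r_def s_def t_def h_def ..
  also have "\<dots> = (coreK (int K) (real t) (real h) - phi (real m * real d) (of_int \<bar>v\<bar>))/(2*c*(real m*real d))
     + (real d^2 - 1)/(12*c*(real m * real d))" unfolding v_def by (rule BE[OF K t])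
  finally have N1: "Nf x y = (coreK (int K) (real t) (real h) - phi (real m * real d) (of_int \<bar>w\<bar>))/(2*c*(real m*real d))
     + (real d^2 - 1)/(12*c*(real m * real d))" using ph by simp
  have G1: "Gmat (m*d) c $$ (x,y) = (real (m*d)^2 - 1 - 6 * phi (real m * real d) (of_int \<bar>w\<bar>)) / (12*c*real (m*d))"
    unfolding Gmat_def phi_def w_def using x y by simp
  have H1: "Hf x y = (coreK (int K) (real t) (real h) + (real d^2 - (real m * real d)^2)/6)/(2*c*(real m*real d))"
    unfolding Hf_def HB_def K_def r_def s_def t_def h_def ..
  show ?thesis unfolding N1 G1 H1 using c0 m2 d1 by (simp add: field_simps)
qed

lemma blk_mod: assumes "u < d" shows "(A*d + u) mod (m*d) = (A mod m)*d + u"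
proof -
  have "A*d + u = (A div m)*(m*d) + ((A mod m)*d + u)"
    by (metis (no_types, lifting) add.assoc distrib_right div_mult_mod_eq mult.assoc mult.commute)
  moreover have "(A mod m)*d + u < m*d"
  proof -
    have "A mod m + 1 \<le> m" using m2 by (simp add: Suc_leI)
    then have "(A mod m + 1) * d \<le> m * d" by (rule mult_right_mono) simp
    then show ?thesis using assms by (simp add: algebra_simps)
  qed
  ultimately show ?thesis by (metis mod_mult_self3 mod_less)
qed

lemma blk_div: assumes "u < d" shows "((A mod m)*d + u) div d = A mod m" "((A mod m)*d + u) mod d = u"
  using assms by auto

lemma kb_shift: "int (kb s (A mod m)) = (int s - int A) mod int m"
  unfolding kb_int by (simp add: of_nat_mod mod_diff_right_eq)

lemma nb_right: assumes x: "x < m*d"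
  shows "x mod d + 1 < d \<Longrightarrow> (x+1) mod (m*d) div d = x div d \<and> (x+1) mod (m*d) mod d = x mod d + 1"
    and "x mod d + 1 = d \<Longrightarrow> (x+1) mod (m*d) mod d = 0 \<and> int (kb s ((x+1) mod (m*d) div d)) = (int (kb s (x div d)) - 1) mod int m"
proof -
  have xr: "x div d < m" using x d1 by (simp add: div_less_iff_less_mult)
  have xe: "x = (x div d) * d + x mod d" by simp
  {
    assume t: "x mod d + 1 < d"
    have e0: "x + 1 = (x div d)*d + (x mod d + 1)" using xe by simp
    have "(x+1) mod (m*d) = ((x div d)*d + (x mod d + 1)) mod (m*d)" by (simp only: e0[symmetric])
    also have "\<dots> = ((x div d) mod m)*d + (x mod d + 1)" by (rule blk_mod[OF t])
    finally have "(x+1) mod (m*d) = ((x div d) mod m)*d + (x mod d + 1)" .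
    then show "(x+1) mod (m*d) div d = x div d \<and> (x+1) mod (m*d) mod d = x mod d + 1"
      using blk_div[OF t, of "x div d"] xr by simp
  }
  {
    assume t: "x mod d + 1 = d"
    have e00: "x + 1 = (x div d)*d + (x mod d + 1)" using xe by simp
    have e0: "x + 1 = (x div d + 1)*d + 0" unfolding e00 t by (simp add: algebra_simps)
    have "(x+1) mod (m*d) = ((x div d + 1)*d + 0) mod (m*d)" by (simp only: e0[symmetric])
    also have "\<dots> = ((x div d + 1) mod m)*d + 0" by (rule blk_mod) (use d1 in simp)
    finally have e: "(x+1) mod (m*d) = ((x div d + 1) mod m)*d + 0" .
    have "(x+1) mod (m*d) mod d = 0" unfolding e by simp
    moreover have "(x+1) mod (m*d) div d = (x div d + 1) mod m" unfolding e using d1 by simp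
    then have "int (kb s ((x+1) mod (m*d) div d)) = (int s - int (x div d + 1)) mod int m" by (simp add: kb_shift)
    moreover have "(int s - int (x div d + 1)) mod int m = (int (kb s (x div d)) - 1) mod int m"
      unfolding kb_int by (simp add: mod_diff_left_eq algebra_simps)
    ultimately show "(x+1) mod (m*d) mod d = 0 \<and> int (kb s ((x+1) mod (m*d) div d)) = (int (kb s (x div d)) - 1) mod int m"
      by simp
  }
qed

lemma nb_left: assumes x: "x < m*d"
  shows "x mod d \<ge> 1 \<Longrightarrow> (x + m*d - 1) mod (m*d) div d = x div d \<and> (x + m*d - 1) mod (m*d) mod d = x mod d - 1"
    and "x mod d = 0 \<Longrightarrow> (x + m*d - 1) mod (m*d) mod d = d - 1 \<and> int (kb s ((x + m*d - 1) mod (m*d) div d)) = (int (kb s (x div d)) + 1) mod int m"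
proof -
  have xr: "x div d < m" using x d1 by (simp add: div_less_iff_less_mult)
  have xe: "x = (x div d) * d + x mod d" by simp
  have md: "m*d \<ge> d" using m2 by simp
  {
    assume t: "x mod d \<ge> 1"
    have "x mod d < d" using d1 by simp
    then have t': "x mod d - 1 < d" by (rule less_imp_diff_less)
    have e00: "x + m*d - 1 = (x div d)*d + m*d + (x mod d - 1)" using xe t by linarith
    have e0: "x + m*d - 1 = (x div d + m)*d + (x mod d - 1)" unfolding e00 by (simp add: algebra_simps)
    have "(x + m*d - 1) mod (m*d) = ((x div d + m)*d + (x mod d - 1)) mod (m*d)" by (simp only: e0[symmetric])
    also have "\<dots> = ((x div d + m) mod m)*d + (x mod d - 1)" by (rule blk_mod[OF t'])
    finally have "(x + m*d - 1) mod (m*d) = ((x div d + m) mod m)*d + (x mod d - 1)" .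
    then show "(x + m*d - 1) mod (m*d) div d = x div d \<and> (x + m*d - 1) mod (m*d) mod d = x mod d - 1"
      using blk_div[OF t', of "x div d + m"] xr by simp
  }
  {
    assume t: "x mod d = 0"
    have t': "d - 1 < d" using d1 by simp
    define P where "P = x div d + m - 1"
    have P: "x div d + m = P + 1" unfolding P_def using m2 by simp
    have "x = (x div d)*d" using xe t by simp
    then have "x + m*d = (P + 1)*d" using P by (metis add_mult_distrib)
    then have "x + m*d - 1 = P*d + d - 1" by simp
    also have "\<dots> = P*d + (d - 1)" using d1 by simp
    finally have e0: "x + m*d - 1 = (x div d + m - 1)*d + (d - 1)" unfolding P_def .
    have "(x + m*d - 1) mod (m*d) = ((x div d + m - 1)*d + (d - 1)) mod (m*d)" by (simp only: e0[symmetric])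
    also have "\<dots> = ((x div d + m - 1) mod m)*d + (d - 1)" by (rule blk_mod[OF t'])
    finally have e: "(x + m*d - 1) mod (m*d) = ((x div d + m - 1) mod m)*d + (d - 1)" .
    have "(x + m*d - 1) mod (m*d) mod d = d - 1" unfolding e using blk_div[OF t'] by simp
    moreover have "(x + m*d - 1) mod (m*d) div d = (x div d + m - 1) mod m" unfolding e using blk_div[OF t'] by simp
    then have "int (kb s ((x + m*d - 1) mod (m*d) div d)) = (int s - int (x div d + m - 1)) mod int m" by (simp add: kb_shift)
    moreover have "(int s - int (x div d + m - 1)) mod int m = (int (kb s (x div d)) + 1) mod int m"
    proof -
      have "int (x div d + m - 1) = int (x div d) - 1 + int m" using m2 by simp
      then have "(int s - int (x div d + m - 1)) mod int m = ((int s - int (x div d) + 1) - int m) mod int m" by (simp add: algebra_simps)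
      also have "\<dots> = (int s - int (x div d) + 1) mod int m" by (simp add: mod_diff_right_eq[symmetric])
      also have "\<dots> = (int (kb s (x div d)) + 1) mod int m" unfolding kb_int by (simp add: mod_add_left_eq)
      finally show ?thesis .
    qed
    ultimately show "(x + m*d - 1) mod (m*d) mod d = d - 1 \<and> int (kb s ((x + m*d - 1) mod (m*d) div d)) = (int (kb s (x div d)) + 1) mod int m"
      by simp
  }
qed

lemma cont: assumes "0 \<le> K" "K < int m" shows "coreK ((K - 1) mod int m) 0 h = coreK K (real d) h"
proof (cases "K = 0")
  case True
  have "(K - 1) mod int m = int m - 1" using True m2 by (simp add: zmod_minus1)
  then show ?thesis using True A2K by simp
next
  case False
  then have "(K - 1) mod int m = K - 1" using assms by simp
  then show ?thesis using A1K[of K] assms False by simp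
qed

lemma HB_lin3: "2 * HB K t h - HB K (t+1) h - HB K (t-1) h = 0"
proof -
  have nz: "c \<noteq> 0" "real d \<noteq> 0" "real m \<noteq> 0" using c0 d1 m2 by auto
  show ?thesis unfolding HB_def coreK_lin[of K t] coreK_lin[of K "t+1"] coreK_lin[of K "t-1"]
    using nz by (simp add: field_simps) (Groebner_Basis.algebra)?
qed

lemma HR: assumes x: "x < m*d" and y: "y < m*d" and t: "x mod d \<ge> 1"
  shows "c * (2 * Hf x y - Hf ((x+1) mod (m*d)) y - Hf ((x + m*d - 1) mod (m*d)) y) = 0"
proof -
  define K where "K = int (kb (y div d) (x div d))"
  have K: "0 \<le> K" "K < int m" unfolding K_def using kb_lt by auto
  have h0: "Hf x y = HB K (real (x mod d)) (y mod d)" unfolding Hf_def K_def ..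
  have hl: "Hf ((x + m*d - 1) mod (m*d)) y = HB K (real (x mod d) - 1) (y mod d)"
    using nb_left(1)[OF x t] t unfolding Hf_def K_def by (simp add: of_nat_diff)
  have hr: "Hf ((x+1) mod (m*d)) y = HB K (real (x mod d) + 1) (y mod d)"
  proof (cases "x mod d + 1 < d")
    case True then show ?thesis using nb_right(1)[OF x] unfolding Hf_def K_def by (simp add: add.commute)
  next
    case False
    have "x mod d < d" using d1 by simp
    then have tt: "x mod d + 1 = d" using False by linarith
    have "Hf ((x+1) mod (m*d)) y = HB ((K - 1) mod int m) 0 (y mod d)"
      using nb_right(2)[OF x tt, of "y div d"] unfolding Hf_def K_def by simp
    also have "\<dots> = HB K (real d) (y mod d)" unfolding HB_def cont[OF K] ..
    also have "real d = real (x mod d) + 1" using tt by (metis of_nat_Suc Suc_eq_plus1 add.commute)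
    finally show ?thesis .
  qed
  show ?thesis unfolding h0 hl hr using HB_lin3[of K "real (x mod d)" "y mod d"] by simp
qed

lemma alg_HS:
  fixes cc nn mm aa X0 X1 X2 K0 F C CS SP :: real
  assumes "cc \<noteq> 0" "nn \<noteq> 0" "mm \<noteq> 0"
  shows "cc*(2*((X0+K0)/(2*cc*nn)) - (X1+K0)/(2*cc*nn) - (X2+K0)/(2*cc*nn)) + aa*(((X0 - F)/(2*cc*nn) + C) - (1/mm)*((CS - SP)/(2*cc*nn) + mm*C))
       = cc*(2*X0 - X1 - X2)/(2*cc*nn) + aa*((X0 - F)/(2*cc*nn) - (1/mm)*((CS - SP)/(2*cc*nn)))"
  using assms by (simp add: field_simps)

lemma Nf_row0: assumes "j < m" "y < m*d"
  shows "Nf (j*d) y = (coreK (int (kb (y div d) j)) 0 (real (y mod d))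
      - (real (kb (y div d) j) * real d + real (y mod d)) * (real m * real d - real (kb (y div d) j) * real d - real (y mod d)))/(2*c*(real m*real d))
     + (real d^2 - 1)/(12*c*(real m * real d))"
proof -
  have d0: "d > 0" using d1 by simp
  have hd: "y mod d < d" using d0 by simp
  have "Nf (j*d) y = blockEntry m d a c (kb (y div d) j + 1) (0+1) (y mod d)" unfolding Nf_def using d0 by simp
  also have "\<dots> = (coreK (int (kb (y div d) j)) (real 0) (real (y mod d))
     - phi (real m * real d) (of_int \<bar>int 0 - int (kb (y div d) j) * int d - int (y mod d)\<bar>))/(2*c*(real m*real d))
     + (real d^2 - 1)/(12*c*(real m * real d))" by (rule BE[OF kb_lt _ hd]) (use d0 in simp)
  also have "\<bar>int 0 - int (kb (y div d) j) * int d - int (y mod d)\<bar> = int (kb (y div d) j) * int d + int (y mod d)"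
  proof -
    have "int (kb (y div d) j) * int d \<ge> 0" by simp
    then show ?thesis by (subst abs_of_nonpos; linarith)
  qed
  finally show ?thesis unfolding phi_def by simp
qed

lemma Nsum: assumes y: "y < m*d"
  shows "(\<Sum>j<m. Nf (j*d) y) = (CSX (real m) (real m * real d) (real d) a c TT 0 (real (y mod d)) SUm (Vz (int m - 1)) (Uz qq (int m - 1))
       - Sphi (real m) (real m * real d) (real d) (real (y mod d)))/(2*c*(real m*real d)) + real m * ((real d^2 - 1)/(12*c*(real m * real d)))"
proof -
  define h where "h = real (y mod d)"
  define f where "f = (\<lambda>k::nat. (coreK (int k) 0 h - (real k * real d + h) * (real m * real d - real k * real d - h))/(2*c*(real m*real d))
     + (real d^2 - 1)/(12*c*(real m * real d)))"
  have m0: "m > 0" using m2 by simp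
  have "(\<Sum>j<m. Nf (j*d) y) = (\<Sum>j<m. f (nat ((int (y div d) - int j) mod int m)))"
    by (rule sum.cong[OF refl]) (simp add: Nf_row0 y f_def h_def kb_def)
  also have "\<dots> = (\<Sum>k<m. f k)" by (rule sum_mod_reflect[OF m0])
  also have "\<dots> = ((\<Sum>k<m. coreK (int k) 0 h) - (\<Sum>k<m. (real k * real d + h) * (real m * real d - real k * real d - h)))/(2*c*(real m*real d))
      + real m * ((real d^2 - 1)/(12*c*(real m * real d)))"
    unfolding f_def by (simp add: sum.distrib sum_subtractf flip: sum_divide_distrib)
  finally show ?thesis unfolding CSum SphiSum h_def by simp
qed

lemma HS: assumes x: "x < m*d" and y: "y < m*d" and t: "x mod d = 0"
  shows "c * (2 * Hf x y - Hf ((x+1) mod (m*d)) y - Hf ((x + m*d - 1) mod (m*d)) y)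
     + a * (Nf x y - (1 / real m) * (\<Sum>j<m. Nf (j*d) y)) = 0"
proof -
  define K where "K = int (kb (y div d) (x div d))"
  define h where "h = y mod d"
  have K: "0 \<le> K" "K < int m" unfolding K_def using kb_lt by auto
  have xr: "x div d < m" using x d1 by (simp add: div_less_iff_less_mult)
  have h0: "Hf x y = HB K 0 h" unfolding Hf_def K_def h_def using t by simp
  have hr: "Hf ((x+1) mod (m*d)) y = HB K 1 h"
  proof (cases "x mod d + 1 < d")
    case True then show ?thesis using nb_right(1)[OF x] t unfolding Hf_def K_def h_def by simp
  next
    case False
    have "x mod d < d" using d1 by simp
    then have tt: "x mod d + 1 = d" using False by linarith
    have "Hf ((x+1) mod (m*d)) y = HB ((K - 1) mod int m) 0 h"
      using nb_right(2)[OF x tt, of "y div d"] unfolding Hf_def K_def h_def by simp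
    also have "\<dots> = HB K (real d) h" unfolding HB_def cont[OF K] ..
    also have "real d = 1" using tt t by simp
    finally show ?thesis .
  qed
  have hl: "Hf ((x + m*d - 1) mod (m*d)) y = HB ((K + 1) mod int m) (real d - 1) h"
    using nb_left(2)[OF x t, of "y div d"] d1 unfolding Hf_def K_def h_def by (simp add: of_nat_diff)
  have xe: "x = (x div d) * d" using t by (metis add_0_right div_mult_mod_eq)
  have nx: "Nf x y = (coreK K 0 (real h)
      - (real (kb (y div d) (x div d)) * real d + real h) * (real m * real d - real (kb (y div d) (x div d)) * real d - real h))/(2*c*(real m*real d))
     + (real d^2 - 1)/(12*c*(real m * real d))"
    using Nf_row0[OF xr y] xe unfolding K_def h_def by simp
  have rk: "real (kb (y div d) (x div d)) = of_int K" unfolding K_def by simp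
  have nz: "c \<noteq> 0" "real m * real d \<noteq> 0" "real m \<noteq> 0" using c0 d1 m2 by auto
  have E: "c * (2 * Hf x y - Hf ((x+1) mod (m*d)) y - Hf ((x + m*d - 1) mod (m*d)) y)
     + a * (Nf x y - (1 / real m) * (\<Sum>j<m. Nf (j*d) y))
     = c*(2*coreK K 0 (real h) - coreK K 1 (real h) - coreK ((K + 1) mod int m) (real d - 1) (real h))/(2*c*(real m * real d))
       + a*((coreK K 0 (real h) - (of_int K * real d + real h) * (real m * real d - of_int K * real d - real h))/(2*c*(real m * real d))
          - (1/real m)*((CSX (real m) (real m * real d) (real d) a c TT 0 (real h) SUm (Vz (int m - 1)) (Uz qq (int m - 1))
       - Sphi (real m) (real m * real d) (real d) (real h))/(2*c*(real m*real d))))"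
    unfolding h0 hr hl nx Nsum[OF y] HB_def h_def[symmetric] rk
    by (rule alg_HS[OF nz])
  show ?thesis
  proof (cases "K \<le> int m - 2")
    case True
    have "(K + 1) mod int m = K + 1" using True K by simp
    then show ?thesis unfolding E using C1K[OF K(1) True, of "real h"] by simp
  next
    case False
    then have Km: "K = int m - 1" using K by simp
    have "(K + 1) mod int m = 0" using Km by simp
    moreover have "of_int K = real m - 1" using Km m2 by simp
    ultimately show ?thesis unfolding E using C2K[of "real h"] Km by simp
  qed
qed

lemma Ncolsum: assumes y: "y < m*d" shows "(\<Sum>x<m*d. Nf x y) = 0"
proof -
  define h where "h = y mod d"
  have d0: "d > 0" using d1 by simp
  have m0: "m > 0" using m2 by simp
  have "(\<Sum>x<m*d. Nf x y) = (\<Sum>x<m*d. Gmat (m*d) c $$ (x,y)) + (\<Sum>x<m*d. Hf x y)"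
    by (simp add: N_decomp y sum.distrib)
  also have "(\<Sum>x<m*d. Gmat (m*d) c $$ (x,y)) = 0" by (rule G_colsum[OF y])
  also have "(\<Sum>x<m*d. Hf x y) = (\<Sum>j<m. \<Sum>t<d. Hf (j*d + t) y)" by (rule sum_split_blocks)
  also have "\<dots> = (\<Sum>j<m. \<Sum>t<d. HB (int (nat ((int (y div d) - int j) mod int m))) (real t) h)"
    by (rule sum.cong[OF refl], rule sum.cong[OF refl]) (simp add: Hf_def h_def kb_def d0)
  also have "\<dots> = (\<Sum>t<d. \<Sum>j<m. HB (int (nat ((int (y div d) - int j) mod int m))) (real t) h)" by (rule sum.swap)
  also have "\<dots> = (\<Sum>t<d. \<Sum>k<m. HB (int k) (real t) h)"
    by (rule sum.cong[OF refl], rule sum_mod_reflect[OF m0, where f="\<lambda>k. HB (int k) _ h"])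
  also have "\<dots> = (\<Sum>k<m. \<Sum>t<d. HB (int k) (real t) h)" by (rule sum.swap)
  also have "\<dots> = ((\<Sum>k<m. \<Sum>t<d. coreK (int k) (real t) (real h)) + real m * real d * ((real d^2 - (real m * real d)^2)/6))/(2*c*(real m*real d))"
    unfolding HB_def by (simp add: sum.distrib flip: sum_divide_distrib)
  also have "\<dots> = 0" using DK[of "real h"] by (simp add: algebra_simps)
  finally show ?thesis by simp
qed

end


context cyc
begin

definition "Nm = mat (m*d) (m*d) (\<lambda>(x,y). Nf x y)"
definition "Jm = (mat (m*d) (m*d) (\<lambda>_. 1) :: real mat)"

lemma Gc: "Gmat (m*d) c \<in> carrier_mat (m*d) (m*d)" unfolding Gmat_def by simp
lemma Lc: "Lm \<in> carrier_mat (m*d) (m*d)" unfolding Lm_def by simp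
lemma Nc: "Nm \<in> carrier_mat (m*d) (m*d)" unfolding Nm_def by simp
lemma Jc: "Jm \<in> carrier_mat (m*d) (m*d)" unfolding Jm_def by simp
lemma Pc: "Pimat m d a \<in> carrier_mat (m*d) (m choose 2)" by (rule P_carrier)
lemma Ptc: "transpose_mat (Pimat m d a) \<in> carrier_mat (m choose 2) (m*d)" using Pc by simp
lemma PPc: "Pimat m d a * transpose_mat (Pimat m d a) \<in> carrier_mat (m*d) (m*d)" using Pc Ptc by simp

lemma PPsum: assumes x: "x < m*d"
  shows "(\<Sum>z<m*d. (if x mod d = 0 \<and> z mod d = 0 then a * ((if x = z then 1 else 0) - 1 / real m) else 0) * f z)
    = (if x mod d = 0 then a * (f x - (1 / real m) * (\<Sum>j<m. f (j*d))) else 0)"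
proof (cases "x mod d = 0")
  case False then show ?thesis by simp
next
  case True
  have d0: "d > 0" using d1 by simp
  have "(\<Sum>z<m*d. (if x mod d = 0 \<and> z mod d = 0 then a * ((if x = z then 1 else 0) - 1 / real m) else 0) * f z)
     = a * ((\<Sum>z<m*d. (if z = x then 1 else 0) * f z) - (1 / real m) * (\<Sum>z<m*d. (if z mod d = 0 then f z else 0)))"
  proof -
    have "(\<Sum>z<m*d. (if x mod d = 0 \<and> z mod d = 0 then a * ((if x = z then 1 else 0) - 1 / real m) else 0) * f z)
      = (\<Sum>z<m*d. a * ((if z = x then 1 else 0) * f z - (1 / real m) * (if z mod d = 0 then f z else 0)))"
      by (rule sum.cong[OF refl]) (use True in \<open>auto simp: algebra_simps\<close>)
    then show ?thesis by (simp only: sum_subtractf sum_distrib_left[symmetric])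
  qed
  also have "(\<Sum>z<m*d. (if z = x then 1 else 0) * f z) = f x" by (rule sum_delta_real[OF x])
  also have "(\<Sum>z<m*d. (if z mod d = 0 then f z else 0)) = (\<Sum>j<m. \<Sum>t<d. (if (j*d+t) mod d = 0 then f (j*d+t) else 0))"
    by (rule sum_split_blocks)
  also have "\<dots> = (\<Sum>j<m. f (j*d))"
  proof (rule sum.cong[OF refl])
    fix j
    have "(\<Sum>t<d. (if (j*d+t) mod d = 0 then f (j*d+t) else 0)) = (\<Sum>t<d. if t = 0 then f (j*d+t) else 0)"
      by (rule sum.cong[OF refl]) auto
    also have "\<dots> = f (j*d)" using d0 by (simp add: sum.delta)
    finally show "(\<Sum>t<d. (if (j*d+t) mod d = 0 then f (j*d+t) else 0)) = f (j*d)" .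
  qed
  finally show ?thesis using True by simp
qed

lemma F1: "(Lm + Pimat m d a * transpose_mat (Pimat m d a)) * Nm = 1\<^sub>m (m*d) - (1 / real (m*d)) \<cdot>\<^sub>m Jm"
proof (rule eq_matI)
  fix x y assume "x < dim_row (1\<^sub>m (m*d) - (1 / real (m*d)) \<cdot>\<^sub>m Jm)" "y < dim_col (1\<^sub>m (m*d) - (1 / real (m*d)) \<cdot>\<^sub>m Jm)"
  then have x: "x < m*d" and y: "y < m*d" unfolding Jm_def by auto
  define PP where "PP = Pimat m d a * transpose_mat (Pimat m d a)"
  have p: "m*d > 0" using m2 d1 by simp
  have x1: "(x+1) mod (m*d) < m*d" and x2: "(x + m*d - 1) mod (m*d) < m*d" using p by auto
  have "((Lm + PP) * Nm) $$ (x,y) = (\<Sum>z<m*d. (Lm + PP) $$ (x,z) * Nm $$ (z,y))"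
    by (rule mult_entry[OF _ Nc x y]) (use Lc PPc in \<open>simp add: PP_def\<close>)
  also have "\<dots> = (\<Sum>z<m*d. Lm $$ (x,z) * Nf z y) + (\<Sum>z<m*d. (if x mod d = 0 \<and> z mod d = 0 then a * ((if x = z then 1 else 0) - 1 / real m) else 0) * Nf z y)"
    unfolding sum.distrib[symmetric]
  proof (rule sum.cong[OF refl])
    fix z assume z: "z \<in> {..<m*d}"
    have "(Lm + PP) $$ (x,z) = Lm $$ (x,z) + PP $$ (x,z)" using PPc x z unfolding PP_def by (subst index_add_mat) auto
    moreover have "PP $$ (x,z) = (if x mod d = 0 \<and> z mod d = 0 then a * ((if x = z then 1 else 0) - 1 / real m) else 0)"
      unfolding PP_def using x z by (simp add: PP_ent)
    moreover have "Nm $$ (z,y) = Nf z y" using z y unfolding Nm_def by simp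
    ultimately show "(Lm + PP) $$ (x,z) * Nm $$ (z,y) = Lm $$ (x,z) * Nf z y + (if x mod d = 0 \<and> z mod d = 0 then a * ((if x = z then 1 else 0) - 1 / real m) else 0) * Nf z y"
      by (simp add: distrib_right)
  qed
  also have "(\<Sum>z<m*d. Lm $$ (x,z) * Nf z y) = c * (2 * Nf x y - Nf ((x+1) mod (m*d)) y - Nf ((x + m*d - 1) mod (m*d)) y)"
    by (rule L_left[OF x])
  also have "(\<Sum>z<m*d. (if x mod d = 0 \<and> z mod d = 0 then a * ((if x = z then 1 else 0) - 1 / real m) else 0) * Nf z y)
     = (if x mod d = 0 then a * (Nf x y - (1 / real m) * (\<Sum>j<m. Nf (j*d) y)) else 0)"
    by (rule PPsum[OF x])
  also have "c * (2 * Nf x y - Nf ((x+1) mod (m*d)) y - Nf ((x + m*d - 1) mod (m*d)) y)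
     = c * (2 * Gmat (m*d) c $$ (x,y) - Gmat (m*d) c $$ ((x+1) mod (m*d), y) - Gmat (m*d) c $$ ((x + m*d - 1) mod (m*d), y))
     + c * (2 * Hf x y - Hf ((x+1) mod (m*d)) y - Hf ((x + m*d - 1) mod (m*d)) y)"
    unfolding N_decomp[OF x y] N_decomp[OF x1 y] N_decomp[OF x2 y] by (simp add: algebra_simps)
  also have "c * (2 * Gmat (m*d) c $$ (x,y) - Gmat (m*d) c $$ ((x+1) mod (m*d), y) - Gmat (m*d) c $$ ((x + m*d - 1) mod (m*d), y))
     = (if x = y then 1 else 0) - 1 / real (m*d)" by (rule G_row[OF x y])
  finally have E: "((Lm + PP) * Nm) $$ (x,y) = (if x = y then 1 else 0) - 1 / real (m*d)
     + c * (2 * Hf x y - Hf ((x+1) mod (m*d)) y - Hf ((x + m*d - 1) mod (m*d)) y)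
     + (if x mod d = 0 then a * (Nf x y - (1 / real m) * (\<Sum>j<m. Nf (j*d) y)) else 0)" .
  have "c * (2 * Hf x y - Hf ((x+1) mod (m*d)) y - Hf ((x + m*d - 1) mod (m*d)) y)
     + (if x mod d = 0 then a * (Nf x y - (1 / real m) * (\<Sum>j<m. Nf (j*d) y)) else 0) = 0"
  proof (cases "x mod d = 0")
    case True then show ?thesis using HS[OF x y True] by simp
  next
    case False then show ?thesis using HR[OF x y] by simp
  qed
  then show "((Lm + PP) * Nm) $$ (x,y) = (1\<^sub>m (m*d) - (1 / real (m*d)) \<cdot>\<^sub>m Jm) $$ (x,y)"
    unfolding E using x y by (simp add: Jm_def)
next
  show "dim_row ((Lm + Pimat m d a * transpose_mat (Pimat m d a)) * Nm) = dim_row (1\<^sub>m (m*d) - (1 / real (m*d)) \<cdot>\<^sub>m Jm)"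
    using Lc Jc Pc by simp
  show "dim_col ((Lm + Pimat m d a * transpose_mat (Pimat m d a)) * Nm) = dim_col (1\<^sub>m (m*d) - (1 / real (m*d)) \<cdot>\<^sub>m Jm)"
    using Nc Jc by simp
qed

lemma F2: "Jm * Nm = 0\<^sub>m (m*d) (m*d)"
proof (rule eq_matI)
  fix x y assume "x < dim_row (0\<^sub>m (m*d) (m*d) :: real mat)" "y < dim_col (0\<^sub>m (m*d) (m*d) :: real mat)"
  then have x: "x < m*d" and y: "y < m*d" by auto
  have "(Jm * Nm) $$ (x,y) = (\<Sum>z<m*d. Jm $$ (x,z) * Nm $$ (z,y))" by (rule mult_entry[OF Jc Nc x y])
  also have "\<dots> = (\<Sum>z<m*d. Nf z y)" by (rule sum.cong[OF refl]) (use x y in \<open>simp add: Jm_def Nm_def\<close>)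
  also have "\<dots> = 0" by (rule Ncolsum[OF y])
  finally show "(Jm * Nm) $$ (x,y) = (0\<^sub>m (m*d) (m*d) :: real mat) $$ (x,y)" using x y by simp
qed (use Jc Nc in auto)

lemma F3: "Gmat (m*d) c * Lm = 1\<^sub>m (m*d) - (1 / real (m*d)) \<cdot>\<^sub>m Jm"
proof (rule eq_matI)
  fix x y assume "x < dim_row (1\<^sub>m (m*d) - (1 / real (m*d)) \<cdot>\<^sub>m Jm)" "y < dim_col (1\<^sub>m (m*d) - (1 / real (m*d)) \<cdot>\<^sub>m Jm)"
  then have x: "x < m*d" and y: "y < m*d" unfolding Jm_def by auto
  have "(Gmat (m*d) c * Lm) $$ (x,y) = (\<Sum>z<m*d. Gmat (m*d) c $$ (x,z) * Lm $$ (z,y))" by (rule mult_entry[OF Gc Lc x y])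
  also have "\<dots> = c * (2 * Gmat (m*d) c $$ (x,y) - Gmat (m*d) c $$ (x, (y + m*d - 1) mod (m*d)) - Gmat (m*d) c $$ (x, (y+1) mod (m*d)))"
    by (rule L_right[OF y])
  also have "\<dots> = (if x = y then 1 else 0) - 1 / real (m*d)" using G_col[OF x y] by (simp add: algebra_simps)
  finally show "(Gmat (m*d) c * Lm) $$ (x,y) = (1\<^sub>m (m*d) - (1 / real (m*d)) \<cdot>\<^sub>m Jm) $$ (x,y)"
    using x y by (simp add: Jm_def)
qed (use Gc Lc Jc in auto)

lemma F4: "Gmat (m*d) c * Jm = 0\<^sub>m (m*d) (m*d)"
proof (rule eq_matI)
  fix x y assume "x < dim_row (0\<^sub>m (m*d) (m*d) :: real mat)" "y < dim_col (0\<^sub>m (m*d) (m*d) :: real mat)"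
  then have x: "x < m*d" and y: "y < m*d" by auto
  have "(Gmat (m*d) c * Jm) $$ (x,y) = (\<Sum>z<m*d. Gmat (m*d) c $$ (x,z) * Jm $$ (z,y))" by (rule mult_entry[OF Gc Jc x y])
  also have "\<dots> = (\<Sum>z<m*d. Gmat (m*d) c $$ (x,z))" by (rule sum.cong[OF refl]) (use y in \<open>simp add: Jm_def\<close>)
  also have "\<dots> = 0" by (rule G_rowsum[OF x])
  finally show "(Gmat (m*d) c * Jm) $$ (x,y) = (0\<^sub>m (m*d) (m*d) :: real mat) $$ (x,y)" using x y by simp
qed (use Gc Jc in auto)

end


lemma minus_zero_mat': "(A :: real mat) \<in> carrier_mat n k \<Longrightarrow> A - 0\<^sub>m n k = A"
  by (rule eq_matI) auto

context cyc
begin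

lemma Kadd: "Nm + Gmat (m*d) c * ((Pimat m d a * transpose_mat (Pimat m d a)) * Nm) = Gmat (m*d) c"
proof -
  define n where "n = m*d"
  define G where "G = Gmat n c"
  define PP where "PP = Pimat m d a * transpose_mat (Pimat m d a)"
  define s where "s = 1 / real n"
  have Gc': "G \<in> carrier_mat n n" and Lc': "Lm \<in> carrier_mat n n" and Nc': "Nm \<in> carrier_mat n n"
    and Jc': "Jm \<in> carrier_mat n n" and PPc': "PP \<in> carrier_mat n n"
    using Gc Lc Nc Jc PPc unfolding n_def G_def PP_def by auto
  have F1': "(Lm + PP) * Nm = 1\<^sub>m n - s \<cdot>\<^sub>m Jm" using F1 unfolding n_def PP_def s_def .
  have F2': "Jm * Nm = 0\<^sub>m n n" using F2 unfolding n_def .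
  have F3': "G * Lm = 1\<^sub>m n - s \<cdot>\<^sub>m Jm" using F3 unfolding n_def G_def s_def .
  have F4': "G * Jm = 0\<^sub>m n n" using F4 unfolding n_def G_def .
  have LN: "Lm * Nm \<in> carrier_mat n n" "PP * Nm \<in> carrier_mat n n" using Lc' Nc' PPc' by auto
  have sJ: "s \<cdot>\<^sub>m Jm \<in> carrier_mat n n" using Jc' by simp
  have "G * ((Lm + PP) * Nm) = G * (Lm * Nm) + G * (PP * Nm)"
    unfolding add_mult_distrib_mat[OF Lc' PPc' Nc'] by (rule mult_add_distrib_mat[OF Gc' LN])
  also have "G * (Lm * Nm) = (G * Lm) * Nm" using Gc' Lc' Nc' by simp
  also have "\<dots> = 1\<^sub>m n * Nm - (s \<cdot>\<^sub>m Jm) * Nm" unfolding F3' by (rule minus_mult_distrib_mat[OF one_carrier_mat sJ Nc'])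
  also have "\<dots> = Nm" using Nc' Jc' F2' by (simp add: mult_smult_assoc_mat[OF Jc' Nc'] minus_zero_mat')
  finally have e1: "G * ((Lm + PP) * Nm) = Nm + G * (PP * Nm)" by (simp add: Nc')
  have "G * ((Lm + PP) * Nm) = G * 1\<^sub>m n - G * (s \<cdot>\<^sub>m Jm)" unfolding F1' by (rule mult_minus_distrib_mat[OF Gc' one_carrier_mat sJ])
  also have "\<dots> = G" using Gc' Jc' F4' by (simp add: mult_smult_distrib[OF Gc' Jc'] minus_zero_mat')
  finally have e2: "Nm + G * (PP * Nm) = G" using e1 by simp
  show ?thesis using e2 unfolding n_def G_def PP_def .
qed

lemma Kid: "Nm = Gmat (m*d) c - Gmat (m*d) c * ((Pimat m d a * transpose_mat (Pimat m d a)) * Nm)"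
proof -
  define n where "n = m*d"
  define G where "G = Gmat n c"
  define PP where "PP = Pimat m d a * transpose_mat (Pimat m d a)"
  have Gc': "G \<in> carrier_mat n n" and Nc': "Nm \<in> carrier_mat n n" and PPc': "PP \<in> carrier_mat n n"
    using Gc Nc PPc unfolding n_def G_def PP_def by auto
  have e2: "Nm + G * (PP * Nm) = G" using Kadd unfolding n_def G_def PP_def .
  show ?thesis unfolding n_def[symmetric] G_def[symmetric] PP_def[symmetric]
  proof (rule eq_matI)
    fix i j assume "i < dim_row (G - G * (PP * Nm))" "j < dim_col (G - G * (PP * Nm))"
    then have ij: "i < n" "j < n" using Gc' PPc' Nc' by auto
    have "(Nm + G * (PP * Nm)) $$ (i,j) = G $$ (i,j)" using e2 by simp
    then show "Nm $$ (i,j) = (G - G * (PP * Nm)) $$ (i,j)" using ij Gc' PPc' Nc' by simp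
  qed (use Gc' PPc' Nc' in auto)
qed

lemma M_eq: "Mmat m d a c = Nm"
proof -
  define n where "n = m*d"
  define b where "b = m choose 2"
  define G where "G = Gmat n c"
  define P where "P = Pimat m d a"
  define Pt where "Pt = transpose_mat P"
  define A where "A = 1\<^sub>m b + Pt * G * P"
  define W where "W = Pt * Nm"
  have Gc': "G \<in> carrier_mat n n" and Nc': "Nm \<in> carrier_mat n n" and Pc': "P \<in> carrier_mat n b"
    and Ptc': "Pt \<in> carrier_mat b n"
    using Gc Nc Pc unfolding n_def G_def P_def Pt_def b_def by auto
  have Ac: "A \<in> carrier_mat b b" unfolding A_def using Ptc' Gc' Pc' by simp
  have Wc: "W \<in> carrier_mat b n" unfolding W_def using Ptc' Nc' by simp
  have PtGc: "Pt * G \<in> carrier_mat b n" using Ptc' Gc' by simp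
  have Kadd': "Nm + G * ((P * Pt) * Nm) = G" using Kadd unfolding n_def G_def P_def Pt_def .
  have M1: "Mmat m d a c = G - G * P * the (mat_inverse A) * Pt * G"
    unfolding Mmat_def Let_def n_def G_def P_def Pt_def A_def b_def ..
  have AW: "A * W = Pt * G"
  proof -
    have "A * W = 1\<^sub>m b * W + (Pt * G * P) * W"
      unfolding A_def by (rule add_mult_distrib_mat[OF one_carrier_mat _ Wc]) (use Ptc' Gc' Pc' in simp)
    also have "1\<^sub>m b * W = Pt * Nm" unfolding W_def by (rule left_mult_one_mat[OF Wc[unfolded W_def]])
    also have "(Pt * G * P) * W = Pt * (G * ((P * Pt) * Nm))"
    proof -
      have GPc: "G * P \<in> carrier_mat n b" using Gc' Pc' by simp
      have s1: "Pt * G * P = Pt * (G * P)" by (rule assoc_mult_mat[OF Ptc' Gc' Pc'])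
      have s2: "Pt * (G * P) * W = Pt * ((G * P) * W)" by (rule assoc_mult_mat[OF Ptc' GPc Wc])
      have s3: "(G * P) * W = G * (P * W)" by (rule assoc_mult_mat[OF Gc' Pc' Wc])
      have s4: "P * W = (P * Pt) * Nm" unfolding W_def by (rule assoc_mult_mat[OF Pc' Ptc' Nc', symmetric])
      show ?thesis unfolding s1 s2 s3 s4 ..
    qed
    also have "Pt * Nm + Pt * (G * ((P * Pt) * Nm)) = Pt * (Nm + G * ((P * Pt) * Nm))"
      by (rule mult_add_distrib_mat[symmetric, OF Ptc' Nc']) (use Gc' Pc' Ptc' Nc' in simp)
    finally show ?thesis unfolding Kadd' .
  qed
  define B where "B = 1\<^sub>m b - W * P"
  have Bc: "B \<in> carrier_mat b b" unfolding B_def by (rule minus_carrier_mat) (use Wc Pc' in simp)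
  have AB: "A * B = 1\<^sub>m b"
  proof -
    have "A * B = A * 1\<^sub>m b - A * (W * P)" unfolding B_def
      by (rule mult_minus_distrib_mat[OF Ac one_carrier_mat]) (use Wc Pc' in simp)
    also have "A * (W * P) = (A * W) * P" using Ac Wc Pc' by simp
    also have "A * 1\<^sub>m b = A" using Ac by simp
    finally have e: "A * B = A - Pt * G * P" unfolding AW .
    show ?thesis unfolding e
    proof (rule eq_matI)
      fix i j assume "i < dim_row (1\<^sub>m b :: real mat)" "j < dim_col (1\<^sub>m b :: real mat)"
      then have ij: "i < b" "j < b" by auto
      have "Pt * G * P \<in> carrier_mat b b" using Ptc' Gc' Pc' by simp
      then have dd: "dim_row (Pt * G * P) = b" "dim_col (Pt * G * P) = b" by auto
      show "(A - Pt * G * P) $$ (i,j) = (1\<^sub>m b :: real mat) $$ (i,j)" unfolding A_def using ij dd by simp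
    qed (use Ac Ptc' Pc' in auto)
  qed
  have BA: "B * A = 1\<^sub>m b" by (rule mat_mult_left_right_inverse[OF Ac Bc AB])
  have unit: "A \<in> Units (ring_mat TYPE(real) b undefined)"
    unfolding Units_def ring_mat_def using Ac Bc AB BA by auto
  obtain X where X: "mat_inverse A = Some X"
  proof (cases "mat_inverse A")
    case None then show ?thesis using mat_inverse(1)[OF Ac None, of undefined] unit by blast
  next
    case (Some X) then show ?thesis using that by blast
  qed
  have Xp: "A * X = 1\<^sub>m b \<and> X * A = 1\<^sub>m b \<and> X \<in> carrier_mat b b" by (rule mat_inverse(2)[OF Ac X])
  then have Xc: "X \<in> carrier_mat b b" and XA: "X * A = 1\<^sub>m b" by auto
  have XW: "X * (Pt * G) = W"
  proof -
    have "X * (Pt * G) = X * (A * W)" unfolding AW ..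
    also have "\<dots> = (X * A) * W" using Xc Ac Wc by simp
    also have "\<dots> = W" unfolding XA using Wc by simp
    finally show ?thesis .
  qed
  have GPc: "G * P \<in> carrier_mat n b" using Gc' Pc' by simp
  have GPXc: "G * P * X \<in> carrier_mat n b" using GPc Xc by simp
  have "G * P * X * Pt * G = (G * P * X) * (Pt * G)" by (rule assoc_mult_mat[OF GPXc Ptc' Gc'])
  also have "\<dots> = (G * P) * (X * (Pt * G))" by (rule assoc_mult_mat[OF GPc Xc PtGc])
  finally have "G * P * X * Pt * G = (G * P) * (X * (Pt * G))" .
  also have "\<dots> = G * (P * W)" unfolding XW by (rule assoc_mult_mat[OF Gc' Pc' Wc])
  also have "P * W = (P * Pt) * Nm" unfolding W_def by (rule assoc_mult_mat[OF Pc' Ptc' Nc', symmetric])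
  finally have "Mmat m d a c = G - G * ((P * Pt) * Nm)" unfolding M1 X by simp
  then show ?thesis using Kid unfolding n_def G_def P_def Pt_def by simp
qed

theorem main:
  "Mmat m d a c \<in> carrier_mat (m * d) (m * d) \<and>
    (\<forall>r < m. \<forall>s < m. \<forall>i \<in> {1..d}. \<forall>h < d.
      Mmat m d a c $$ (r * d + (i - 1), s * d + h)
        = blockEntry m d a c (nat ((int s - int r) mod int m) + 1) i h)"
proof (intro conjI allI impI ballI)
  show "Mmat m d a c \<in> carrier_mat (m * d) (m * d)" unfolding M_eq by (rule Nc)
next
  fix r s i h assume r: "r < m" and s: "s < m" and i: "i \<in> {1..d}" and h: "h < d"
  have i1: "1 \<le> i" "i \<le> d" using i by auto
  have x: "r * d + (i - 1) < m * d"
  proof -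
    have "r * d + (i - 1) < r * d + d" using i1 by simp
    also have "\<dots> = (r + 1) * d" by simp
    also have "\<dots> \<le> m * d" using r by (intro mult_right_mono) auto
    finally show ?thesis .
  qed
  have y: "s * d + h < m * d"
  proof -
    have "s * d + h < s * d + d" using h by simp
    also have "\<dots> = (s + 1) * d" by simp
    also have "\<dots> \<le> m * d" using s by (intro mult_right_mono) auto
    finally show ?thesis .
  qed
  have d0: "d > 0" using d1 by simp
  have j: "i - 1 < d" using i1 by simp
  have e1: "(r * d + (i - 1)) div d = r" "(r * d + (i - 1)) mod d = i - 1"
    using j d0 by (simp_all only: div_mult_self3 mod_mult_self3 div_less mod_less)
  have e2: "(s * d + h) div d = s" "(s * d + h) mod d = h" using h d0 by auto
  show "Mmat m d a c $$ (r * d + (i - 1), s * d + h) = blockEntry m d a c (nat ((int s - int r) mod int m) + 1) i h"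
    unfolding M_eq Nm_def index_mat[OF x y] split Nf_def e1 e2 kb_def using i1 by simp
qed

end

theorem proposition4p6:
  fixes m d :: nat and a c :: real
  assumes "m \<ge> 2" and "d \<ge> 1" and "a > 0" and "c > 0"
  shows "Mmat m d a c \<in> carrier_mat (m * d) (m * d) \<and>
    (\<forall>r < m. \<forall>s < m. \<forall>i \<in> {1..d}. \<forall>h < d.
      Mmat m d a c $$ (r * d + (i - 1), s * d + h)
        = blockEntry m d a c (nat ((int s - int r) mod int m) + 1) i h)"
proof -
  interpret cyc m d a c using assms by unfold_locales
  show ?thesis by (rule main)
qed

end
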